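(* Assume (HN.1), (HN.2), (HO), (HI). Then for $i\in\{0,1\}$, almost surely, $$\lim_{n\to\infty}\frac1{\pi^n}\sum_{k\in\mathbb T_n^i\setminus\mathbb T_0}\varepsilon_k^2\delta_k=\sigma^2\frac{\pi}{\pi-1}Wz^i,\qquad \lim_{n\to\infty}\frac1{\pi^n}\sum_{k\in\mathbb T_n^i\setminus\mathbb T_0}\delta_{2k}\delta_{2k+1}\varepsilon_{2k}\varepsilon_{2k+1}=\rho\,p^{(i)}(1,1)\frac{\pi}{\pi-1}Wz^i.$$
   Context: Tree notation: individuals labelled by $\mathbb{T}=\mathbb{N}^*$, $k$ has daughters $2k$ (type 0) and $2k+1$ (type 1); $\mathbb{G}_n=\{2^n,\dots,2^{n+1}-1\}$, $\mathbb{T}_n=\bigcup_{\ell=0}^n\mathbb{G}_\ell$, $\mathbb{T}^0=\mathbb{T}\cap 2\mathbb{N}$, $\mathbb{T}^1=\mathbb{T}\cap(2\mathbb{N}+1)$, $\mathbb T_n^i=\mathbb T_n\cap\mathbb T^i$. BAR process: $\mathbb E[X_1^8]<\infty$ and for $k\ge1$, $X_{2k}=a+bX_k+\varepsilon_{2k}$, $X_{2k+1}=c+dX_k+\varepsilon_{2k+1}$, $(a,b,c,d)\in\mathbb R^4$, $0<\max(|b|,|d|)<1$; $\mathcal F_n=\sigma(X_k,k\in\mathbb T_n)$. (HN.1): for all $n\ge0$, $k\in\mathbb G_{n+1}$, $\varepsilon_k\in L^8$ and a.s. $\mathbb E[\varepsilon_k|\mathcal F_n]=0$, $\mathbb E[\varepsilon_k^2|\mathcal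 F_n]=\sigma^2$, $\mathbb E[\varepsilon_k^4|\mathcal F_n]=\tau^4$, $\mathbb E[\varepsilon_k^8|\mathcal F_n]=\kappa^8$ with $\sigma^2,\tau^4,\kappa^8\in(0,\infty)$; and for $k\in\mathbb G_n$, $\mathbb E[\varepsilon_{2k}\varepsilon_{2k+1}|\mathcal F_n]=\rho=\rho'\sigma^2$, $\mathbb E[\varepsilon_{2k}^2\varepsilon_{2k+1}^2|\mathcal F_n]=\nu^2\tau^4$, $\mathbb E[\varepsilon_{2k}^4\varepsilon_{2k+1}^4|\mathcal F_n]=\lambda^4\kappa^8$ with $|\rho'|,\nu^2,\lambda^4\in[0,1)$. (HN.2): for each $n\ge0$ the vectors $(\varepsilon_{2k},\varepsilon_{2k+1})$, $k\in\mathbb G_n$, are conditionally independent given $\mathcal F_n$. Observation process: $\delta_1=1$, $\delta_{2k}=\delta_k\zeta_k^0$, $\delta_{2k+1}=\delta_k\zeta_k^1$, with $\boldsymbol\zeta_k=(\zeta_k^0,\zeta_k^1)\in\{0,1\}^2$ independent, common law $p^{(0)}(j_0,j_1)=\mathbb P(\boldsymbol\zeta_k=(j_0,j_1))$ for even $k$ and $p^{(1)}$ for odd $k$; $p_{i0}=p^{(i)}(1,0)+p^{(i)}(1,1)$, $p_{i1}=p^{(i)}(0,1)+p^{(i)}(1,1)$, $\boldsymbol P=(p_{ij})$. (HO): all $p_{ij}>0$ and the Perron eigenvalue $\pi$ of $\boldsymbol P$ satisfies $\pi>1$; $\boldsymbol z=(z^0,z^1)$ is the positive left eigenvector for $\pi$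 with $z^0+z^1=1$. (HI): $(\delta_k)$, $(\boldsymbol\zeta_k)$ are independent of $(X_k)$, $(\varepsilon_k)$. With $Z_n^i=|\{k\in\mathbb G_n\cap\mathbb T^i:\delta_k=1\}|$, $W$ denotes the nonnegative random variable with $(Z_n^0,Z_n^1)/\pi^n\to W\boldsymbol z$ a.s. *)

theory Defs
  imports "HOL-Probability.Probability"
begin

text \<open>Generations and subtrees of the binary tree labelled by positive integers.\<close>

definition Gen :: "nat \<Rightarrow> nat set" where
  "Gen n = {2 ^ n ..< 2 ^ Suc n}"

definition Tr :: "nat \<Rightarrow> nat set" where
  "Tr n = (\<Union>l\<le>n. Gen l)"

definition Ty :: "nat \<Rightarrow> nat set" where
  "Ty i = {k. 1 \<le> k \<and> k mod 2 = i}"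

function delta :: "(nat \<Rightarrow> 'a \<Rightarrow> nat \<times> nat) \<Rightarrow> nat \<Rightarrow> 'a \<Rightarrow> nat" where
  "delta \<zeta> k \<omega> = (if k \<le> 1 then 1
     else delta \<zeta> (k div 2) \<omega> *
       (if even k then fst (\<zeta> (k div 2) \<omega>) else snd (\<zeta> (k div 2) \<omega>)))"
  by auto
termination by (relation "Wellfounded.measure (\<lambda>(_, k, _). k)") auto

declare delta.simps [simp del]

definition Zcount :: "(nat \<Rightarrow> 'a \<Rightarrow> nat \<times> nat) \<Rightarrow> nat \<Rightarrow> nat \<Rightarrow> 'a \<Rightarrow> nat" where
  "Zcount \<zeta> n i \<omega> = card {k \<in> Gen n \<inter> Ty i. delta \<zeta> k \<omega> = 1}"

definition natF :: "'a measure \<Rightarrow> (nat \<Rightarrow> 'a \<Rightarrow> real) \<Rightarrow> nat \<Rightarrow> 'a measure" where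
  "natF M X n = sigma (space M) {X k -` B \<inter> space M | k B. k \<in> Tr n \<and> B \<in> sets borel}"

definition gen_events :: "'a measure \<Rightarrow> 'b measure \<Rightarrow> ('a \<Rightarrow> 'b) \<Rightarrow> 'a set set" where
  "gen_events M N Y = {Y -` B \<inter> space M | B. B \<in> sets N}"

definition perron_eig :: "real \<Rightarrow> real \<Rightarrow> real \<Rightarrow> real \<Rightarrow> real" where
  "perron_eig p00 p01 p10 p11 = Max {x. (p00 - x) * (p11 - x) - p01 * p10 = 0}"

end

theory Submission
  imports Defs
begin

lemma indep_gen_integral:
  fixes F :: "'b \<Rightarrow> real" and G :: "'c \<Rightarrow> real"
  assumes P: "prob_space M"
  and I: "prob_space.indep_set M (gen_events M N1 Y1) (gen_events M N2 Y2)"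
  and mF[measurable]: "F \<in> borel_measurable N1" and mG[measurable]: "G \<in> borel_measurable N2"
  and mY1[measurable]: "Y1 \<in> measurable M N1" and mY2[measurable]: "Y2 \<in> measurable M N2"
  and iF: "integrable M (\<lambda>\<omega>. F (Y1 \<omega>))" and iG: "integrable M (\<lambda>\<omega>. G (Y2 \<omega>))"
  shows "(\<integral>\<omega>. F (Y1 \<omega>) * G (Y2 \<omega>) \<partial>M) = (\<integral>\<omega>. F (Y1 \<omega>) \<partial>M) * (\<integral>\<omega>. G (Y2 \<omega>) \<partial>M)"
    "integrable M (\<lambda>\<omega>. F (Y1 \<omega>) * G (Y2 \<omega>))"
proof -
  interpret prob_space M by (rule P)
  have st: "Int_stable (gen_events M N Y)" for N and Y :: "'a \<Rightarrow> 'd"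
    unfolding Int_stable_def gen_events_def
    apply clarify
    subgoal for a b A B by (rule exI[of _ "A \<inter> B"]) auto
    done
  have I2: "indep_set (sigma_sets (space M) (gen_events M N1 Y1)) (sigma_sets (space M) (gen_events M N2 Y2))"
    by (rule indep_set_sigma_sets[OF I st st])
  have sub1: "{(\<lambda>\<omega>. F (Y1 \<omega>)) -` A \<inter> space M |A. A \<in> sets borel} \<subseteq> gen_events M N1 Y1"
    unfolding gen_events_def
  proof clarify
    fix A :: "real set" assume "A \<in> sets borel"
    then have "F -` A \<inter> space N1 \<in> sets N1" by (rule measurable_sets[OF mF])
    moreover have "(\<lambda>\<omega>. F (Y1 \<omega>)) -` A \<inter> space M = Y1 -` (F -` A \<inter> space N1) \<inter> space M"
      using measurable_space[OF mY1] by auto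
    ultimately show "\<exists>B. (\<lambda>\<omega>. F (Y1 \<omega>)) -` A \<inter> space M = Y1 -` B \<inter> space M \<and> B \<in> sets N1" by blast
  qed
  have sub2: "{(\<lambda>\<omega>. G (Y2 \<omega>)) -` A \<inter> space M |A. A \<in> sets borel} \<subseteq> gen_events M N2 Y2"
    unfolding gen_events_def
  proof clarify
    fix A :: "real set" assume "A \<in> sets borel"
    then have "G -` A \<inter> space N2 \<in> sets N2" by (rule measurable_sets[OF mG])
    moreover have "(\<lambda>\<omega>. G (Y2 \<omega>)) -` A \<inter> space M = Y2 -` (G -` A \<inter> space N2) \<inter> space M"
      using measurable_space[OF mY2] by auto
    ultimately show "\<exists>B. (\<lambda>\<omega>. G (Y2 \<omega>)) -` A \<inter> space M = Y2 -` B \<inter> space M \<and> B \<in> sets N2" by blast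
  qed
  have iv: "indep_var borel (\<lambda>\<omega>. F (Y1 \<omega>)) borel (\<lambda>\<omega>. G (Y2 \<omega>))"
    unfolding indep_var_eq
  proof (intro conjI)
    show "random_variable borel (\<lambda>\<omega>. F (Y1 \<omega>))" "random_variable borel (\<lambda>\<omega>. G (Y2 \<omega>))" by measurable
    show "indep_set (sigma_sets (space M) {(\<lambda>\<omega>. F (Y1 \<omega>)) -` A \<inter> space M |A. A \<in> sets borel})
     (sigma_sets (space M) {(\<lambda>\<omega>. G (Y2 \<omega>)) -` A \<inter> space M |A. A \<in> sets borel})"
      using I2 unfolding indep_set_def
      apply (rule indep_sets_mono_sets)
      using sigma_sets_subseteq[OF sub1] sigma_sets_subseteq[OF sub2]
      by (auto split: bool.split)
  qed
  show "(\<integral>\<omega>. F (Y1 \<omega>) * G (Y2 \<omega>) \<partial>M) = (\<integral>\<omega>. F (Y1 \<omega>) \<partial>M) * (\<integral>\<omega>. G (Y2 \<omega>) \<partial>M)"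
    by (rule indep_var_lebesgue_integral[OF iv iF iG])
  show "integrable M (\<lambda>\<omega>. F (Y1 \<omega>) * G (Y2 \<omega>))"
    by (rule indep_var_integrable[OF iv iF iG])
qed

lemma meas_ext:
  fixes w1 w2 :: "'a \<Rightarrow> ennreal" and g :: "'b \<Rightarrow> ennreal"
  assumes [measurable]: "Y \<in> measurable M N" "w1 \<in> borel_measurable M" "w2 \<in> borel_measurable M"
    "g \<in> borel_measurable N"
  and eq: "\<And>A. A \<in> sets N \<Longrightarrow> (\<integral>\<^sup>+\<omega>. indicator A (Y \<omega>) * w1 \<omega> \<partial>M) = (\<integral>\<^sup>+\<omega>. indicator A (Y \<omega>) * w2 \<omega> \<partial>M)"
  shows "(\<integral>\<^sup>+\<omega>. g (Y \<omega>) * w1 \<omega> \<partial>M) = (\<integral>\<^sup>+\<omega>. g (Y \<omega>) * w2 \<omega> \<partial>M)"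
proof -
  have em: "emeasure (distr (density M w) N Y) A = (\<integral>\<^sup>+\<omega>. indicator A (Y \<omega>) * w \<omega> \<partial>M)"
    if [measurable]: "w \<in> borel_measurable M" "A \<in> sets N" for w A
  proof -
    have "emeasure (distr (density M w) N Y) A = emeasure (density M w) (Y -` A \<inter> space M)"
      by (subst emeasure_distr) auto
    also have "\<dots> = (\<integral>\<^sup>+\<omega>. w \<omega> * indicator (Y -` A \<inter> space M) \<omega> \<partial>M)"
      by (subst emeasure_density) auto
    also have "\<dots> = (\<integral>\<^sup>+\<omega>. indicator A (Y \<omega>) * w \<omega> \<partial>M)"
      by (rule nn_integral_cong) (auto simp: indicator_def)
    finally show ?thesis .
  qed
  have D: "distr (density M w1) N Y = distr (density M w2) N Y"
    by (rule measure_eqI) (auto simp: em eq)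
  have nd: "(\<integral>\<^sup>+x. g x \<partial>distr (density M w) N Y) = (\<integral>\<^sup>+\<omega>. g (Y \<omega>) * w \<omega> \<partial>M)"
    if [measurable]: "w \<in> borel_measurable M" for w
    by (subst nn_integral_distr) (auto simp: nn_integral_density mult.commute)
  show ?thesis using nd[of w1] nd[of w2] D by simp
qed

lemma meas_ext_real:
  fixes w1 w2 :: "'a \<Rightarrow> real" and g :: "'b \<Rightarrow> real"
  assumes [measurable]: "Y \<in> measurable M N" "w1 \<in> borel_measurable M" "w2 \<in> borel_measurable M"
    "g \<in> borel_measurable N"
  and w1p: "AE \<omega> in M. 0 \<le> w1 \<omega>" and w2p: "AE \<omega> in M. 0 \<le> w2 \<omega>" and gp: "\<And>x. 0 \<le> g x"
  and iA1: "\<And>A. A \<in> sets N \<Longrightarrow> integrable M (\<lambda>\<omega>. indicator A (Y \<omega>) * w1 \<omega>)"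
  and iA2: "\<And>A. A \<in> sets N \<Longrightarrow> integrable M (\<lambda>\<omega>. indicator A (Y \<omega>) * w2 \<omega>)"
  and eq: "\<And>A. A \<in> sets N \<Longrightarrow> (\<integral>\<omega>. indicator A (Y \<omega>) * w1 \<omega> \<partial>M) = (\<integral>\<omega>. indicator A (Y \<omega>) * w2 \<omega> \<partial>M)"
  and ig1: "integrable M (\<lambda>\<omega>. g (Y \<omega>) * w1 \<omega>)" and ig2: "integrable M (\<lambda>\<omega>. g (Y \<omega>) * w2 \<omega>)"
  shows "(\<integral>\<omega>. g (Y \<omega>) * w1 \<omega> \<partial>M) = (\<integral>\<omega>. g (Y \<omega>) * w2 \<omega> \<partial>M)"
proof -
  have conv: "(\<integral>\<^sup>+\<omega>. ennreal (u (Y \<omega>)) * ennreal (w \<omega>) \<partial>M) = ennreal (\<integral>\<omega>. u (Y \<omega>) * w \<omega> \<partial>M)"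
    if "integrable M (\<lambda>\<omega>. u (Y \<omega>) * w \<omega>)" "AE \<omega> in M. 0 \<le> w \<omega>" "\<And>x. 0 \<le> u x" for u w
  proof -
    have "(\<integral>\<^sup>+\<omega>. ennreal (u (Y \<omega>)) * ennreal (w \<omega>) \<partial>M) = (\<integral>\<^sup>+\<omega>. ennreal (u (Y \<omega>) * w \<omega>) \<partial>M)"
      by (rule nn_integral_cong) (simp add: ennreal_mult' that(3))
    also have "\<dots> = ennreal (\<integral>\<omega>. u (Y \<omega>) * w \<omega> \<partial>M)"
      by (rule nn_integral_eq_integral[OF that(1)]) (use that(2) in \<open>auto simp: that(3)\<close>)
    finally show ?thesis .
  qed
  have "(\<integral>\<^sup>+\<omega>. ennreal (g (Y \<omega>)) * ennreal (w1 \<omega>) \<partial>M) = (\<integral>\<^sup>+\<omega>. ennreal (g (Y \<omega>)) * ennreal (w2 \<omega>) \<partial>M)"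
  proof (rule meas_ext[where g="\<lambda>x. ennreal (g x)" and Y=Y and N=N])
    fix A assume A: "A \<in> sets N"
    have "(\<integral>\<^sup>+\<omega>. indicator A (Y \<omega>) * ennreal (w1 \<omega>) \<partial>M) = (\<integral>\<^sup>+\<omega>. ennreal (indicator A (Y \<omega>)) * ennreal (w1 \<omega>) \<partial>M)"
      by (simp add: ennreal_indicator)
    also have "\<dots> = ennreal (\<integral>\<omega>. indicator A (Y \<omega>) * w1 \<omega> \<partial>M)"
      by (rule conv[OF iA1[OF A] w1p]) simp
    also have "\<dots> = ennreal (\<integral>\<omega>. indicator A (Y \<omega>) * w2 \<omega> \<partial>M)" using eq[OF A] by simp
    also have "\<dots> = (\<integral>\<^sup>+\<omega>. ennreal (indicator A (Y \<omega>)) * ennreal (w2 \<omega>) \<partial>M)"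
      by (rule conv[OF iA2[OF A] w2p, symmetric]) simp
    also have "\<dots> = (\<integral>\<^sup>+\<omega>. indicator A (Y \<omega>) * ennreal (w2 \<omega>) \<partial>M)"
      by (simp add: ennreal_indicator)
    finally show "(\<integral>\<^sup>+\<omega>. indicator A (Y \<omega>) * ennreal (w1 \<omega>) \<partial>M) = (\<integral>\<^sup>+\<omega>. indicator A (Y \<omega>) * ennreal (w2 \<omega>) \<partial>M)" .
  qed auto
  then have "ennreal (\<integral>\<omega>. g (Y \<omega>) * w1 \<omega> \<partial>M) = ennreal (\<integral>\<omega>. g (Y \<omega>) * w2 \<omega> \<partial>M)"
    using conv[OF ig1 w1p gp] conv[OF ig2 w2p gp] by simp
  moreover have "0 \<le> (\<integral>\<omega>. g (Y \<omega>) * w1 \<omega> \<partial>M)" "0 \<le> (\<integral>\<omega>. g (Y \<omega>) * w2 \<omega> \<partial>M)"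
    using w1p w2p by (auto intro!: integral_nonneg_AE simp: gp)
  ultimately show ?thesis by simp
qed

lemma ci_orth:
  fixes P Q :: "'a \<Rightarrow> real \<times> real" and f h :: "real \<times> real \<Rightarrow> real"
  assumes PS: "prob_space M" and SF: "sigma_finite_subalgebra M F"
  and mP[measurable]: "P \<in> borel_measurable M" and mQ[measurable]: "Q \<in> borel_measurable M" and [measurable]: "f \<in> borel_measurable borel" "h \<in> borel_measurable borel"
  and cind: "\<And>A B. A \<in> sets borel \<Longrightarrow> B \<in> sets borel \<Longrightarrow> AE \<omega> in M.
      real_cond_exp M F (\<lambda>\<omega>. indicator A (P \<omega>) * indicator B (Q \<omega>)) \<omega>
      = real_cond_exp M F (\<lambda>\<omega>. indicator A (P \<omega>)) \<omega> * real_cond_exp M F (\<lambda>\<omega>. indicator B (Q \<omega>)) \<omega>"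
  and iF: "integrable M (\<lambda>\<omega>. f (P \<omega>))"
  and cF: "AE \<omega> in M. real_cond_exp M F (\<lambda>\<omega>. f (P \<omega>)) \<omega> = 0"
  and iFH: "integrable M (\<lambda>\<omega>. f (P \<omega>) * h (Q \<omega>))"
  shows "(\<integral>\<omega>. f (P \<omega>) * h (Q \<omega>) \<partial>M) = 0"
proof -
  interpret prob_space M by (rule PS)
  interpret sigma_finite_subalgebra M F by (rule SF)
  define pB where "pB B = real_cond_exp M F (\<lambda>\<omega>. indicator B (Q \<omega>))" for B
  have pBm[measurable]: "pB B \<in> borel_measurable M" "pB B \<in> borel_measurable F" for B
    unfolding pB_def by auto
  have ind_int: "integrable M (\<lambda>\<omega>. indicator A (R \<omega>) :: real)" if "A \<in> sets borel" "R \<in> borel_measurable M"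
    for A and R :: "'a \<Rightarrow> real \<times> real"
    using that by (intro integrable_const_bound[where B=1]) (auto simp: indicator_def)
  have pBint: "integrable M (pB B)" if "B \<in> sets borel" for B
    unfolding pB_def by (rule real_cond_exp_int(1)[OF ind_int[OF that]]) simp
  have pBpos: "AE \<omega> in M. 0 \<le> pB B \<omega>" if "B \<in> sets borel" for B
    unfolding pB_def using that by (intro real_cond_exp_pos) auto
  have pBle: "AE \<omega> in M. pB B \<omega> \<le> 1" if "B \<in> sets borel" for B
  proof -
    have "AE \<omega> in M. pB B \<omega> \<le> real_cond_exp M F (\<lambda>\<omega>. 1) \<omega>"
      unfolding pB_def using that by (intro real_cond_exp_mono ind_int) (auto simp: indicator_def)
    moreover have "AE \<omega> in M. real_cond_exp M F (\<lambda>\<omega>. 1) \<omega> = 1"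
      by (rule real_cond_exp_F_meas) auto
    ultimately show ?thesis by eventually_elim auto
  qed
  have bnd: "integrable M (\<lambda>\<omega>. u \<omega> * pB B \<omega>)"
    if "B \<in> sets borel" "integrable M u" for u :: "'a \<Rightarrow> real" and B
  proof (rule Bochner_Integration.integrable_bound[OF that(2)])
    show "(\<lambda>\<omega>. u \<omega> * pB B \<omega>) \<in> borel_measurable M"
      using borel_measurable_integrable[OF that(2)] by measurable
    show "AE \<omega> in M. norm (u \<omega> * pB B \<omega>) \<le> norm (u \<omega>)"
      using pBpos[OF that(1)] pBle[OF that(1)]
      by eventually_elim (auto simp: abs_mult intro: mult_left_le)
  qed
  have bndi: "integrable M (\<lambda>\<omega>. u \<omega> * indicator B (R \<omega>))"
    if "integrable M u" "R \<in> borel_measurable M" "B \<in> sets borel" for u :: "'a \<Rightarrow> real" and R :: "'a \<Rightarrow> real \<times> real" and B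
    by (rule Bochner_Integration.integrable_bound[OF that(1)]) (use borel_measurable_integrable[OF that(1)] that(2,3) in \<open>auto simp: indicator_def\<close>)
  have stepb: "(\<integral>\<omega>. indicator A (P \<omega>) * indicator B (Q \<omega>) \<partial>M) = (\<integral>\<omega>. indicator A (P \<omega>) * pB B \<omega> \<partial>M)"
    if A: "A \<in> sets borel" and B: "B \<in> sets borel" for A B
  proof -
    note AB[measurable] = A B
    have "(\<integral>\<omega>. indicator A (P \<omega>) * indicator B (Q \<omega>) \<partial>M)
        = (\<integral>\<omega>. real_cond_exp M F (\<lambda>\<omega>. indicator A (P \<omega>) * indicator B (Q \<omega>)) \<omega> \<partial>M)"
      by (rule real_cond_exp_int(2)[symmetric], rule bndi, rule ind_int[OF A]) (auto simp: B)
    also have "\<dots> = (\<integral>\<omega>. pB B \<omega> * real_cond_exp M F (\<lambda>\<omega>. indicator A (P \<omega>)) \<omega> \<partial>M)"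
      by (rule integral_cong_AE) (use cind[OF A B] in \<open>auto simp: pB_def\<close>)
    also have "\<dots> = (\<integral>\<omega>. pB B \<omega> * indicator A (P \<omega>) \<partial>M)"
      by (rule real_cond_exp_intg(2)) (use bnd[OF B ind_int[OF A]] in \<open>auto simp: mult.commute\<close>)
    finally show ?thesis by (simp add: mult.commute)
  qed
  define fp where "fp x = max (f x) 0" for x
  define fm where "fm x = max (- f x) 0" for x
  have [measurable]: "fp \<in> borel_measurable borel" "fm \<in> borel_measurable borel"
    unfolding fp_def fm_def by auto
  have fpm: "f x = fp x - fm x" for x unfolding fp_def fm_def by auto
  have iFp: "integrable M (\<lambda>\<omega>. fp (P \<omega>))" "integrable M (\<lambda>\<omega>. fm (P \<omega>))"
    by (rule Bochner_Integration.integrable_bound[OF iF]; auto simp: fp_def fm_def)+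
  have stepc: "(\<integral>\<omega>. g (P \<omega>) * indicator B (Q \<omega>) \<partial>M) = (\<integral>\<omega>. g (P \<omega>) * pB B \<omega> \<partial>M)"
    if B: "B \<in> sets borel" and g: "g = fp \<or> g = fm" for g B
  proof -
    note BB[measurable] = B
    have [measurable]: "g \<in> borel_measurable borel" using g by auto
    have ig: "integrable M (\<lambda>\<omega>. g (P \<omega>))" using g iFp by auto
    show ?thesis
    proof (rule meas_ext_real[where N=borel and Y=P and ?w1.0="\<lambda>\<omega>. indicator B (Q \<omega>)" and ?w2.0="pB B" and g=g])
      show "\<And>x. 0 \<le> g x" using g by (auto simp: fp_def fm_def)
      show "AE \<omega> in M. 0 \<le> (indicator B (Q \<omega>) :: real)" by auto
      show "AE \<omega> in M. 0 \<le> pB B \<omega>" by (rule pBpos[OF B])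
      fix A :: "(real \<times> real) set" assume A[measurable]: "A \<in> sets borel"
      show "integrable M (\<lambda>\<omega>. indicator A (P \<omega>) * (indicator B (Q \<omega>) :: real))" by (rule bndi[OF ind_int[OF A]]) (auto simp: B)
      show "integrable M (\<lambda>\<omega>. indicator A (P \<omega>) * pB B \<omega>)" by (rule bnd[OF B ind_int[OF A]]) auto
      show "(\<integral>\<omega>. indicator A (P \<omega>) * indicator B (Q \<omega>) \<partial>M) = (\<integral>\<omega>. indicator A (P \<omega>) * pB B \<omega> \<partial>M)"
        by (rule stepb[OF A B])
    next
      show "integrable M (\<lambda>\<omega>. g (P \<omega>) * indicator B (Q \<omega>))" by (rule bndi[OF ig mQ B])
      show "integrable M (\<lambda>\<omega>. g (P \<omega>) * pB B \<omega>)" by (rule bnd[OF B ig])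
    qed auto
  qed
  have stepd: "(\<integral>\<omega>. f (P \<omega>) * indicator B (Q \<omega>) \<partial>M) = 0" if B: "B \<in> sets borel" for B
  proof -
    note BB[measurable] = B
    have "(\<integral>\<omega>. f (P \<omega>) * indicator B (Q \<omega>) \<partial>M)
       = (\<integral>\<omega>. fp (P \<omega>) * indicator B (Q \<omega>) - fm (P \<omega>) * indicator B (Q \<omega>) \<partial>M)"
      by (simp add: fpm left_diff_distrib)
    also have "\<dots> = (\<integral>\<omega>. fp (P \<omega>) * indicator B (Q \<omega>) \<partial>M) - (\<integral>\<omega>. fm (P \<omega>) * indicator B (Q \<omega>) \<partial>M)"
      by (rule Bochner_Integration.integral_diff; rule bndi; (rule iFp mQ B)?)
    also have "\<dots> = (\<integral>\<omega>. fp (P \<omega>) * pB B \<omega> \<partial>M) - (\<integral>\<omega>. fm (P \<omega>) * pB B \<omega> \<partial>M)"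
      using stepc[OF B] by simp
    also have "\<dots> = (\<integral>\<omega>. fp (P \<omega>) * pB B \<omega> - fm (P \<omega>) * pB B \<omega> \<partial>M)"
      by (rule Bochner_Integration.integral_diff[symmetric]; rule bnd[OF B]; rule iFp)
    also have "\<dots> = (\<integral>\<omega>. pB B \<omega> * f (P \<omega>) \<partial>M)"
      by (simp add: fpm algebra_simps)
    also have "\<dots> = (\<integral>\<omega>. pB B \<omega> * real_cond_exp M F (\<lambda>\<omega>. f (P \<omega>)) \<omega> \<partial>M)"
      by (rule real_cond_exp_intg(2)[symmetric]) (use bnd[OF B iF] in \<open>auto simp: mult.commute\<close>)
    also have "\<dots> = 0"
    proof -
      have "AE \<omega> in M. pB B \<omega> * real_cond_exp M F (\<lambda>\<omega>. f (P \<omega>)) \<omega> = 0"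
        using cF by eventually_elim simp
      then show ?thesis by (subst integral_cong_AE[where g="\<lambda>_. 0"]) auto
    qed
    finally show ?thesis .
  qed
  define hp where "hp x = max (h x) 0" for x
  define hm where "hm x = max (- h x) 0" for x
  have [measurable]: "hp \<in> borel_measurable borel" "hm \<in> borel_measurable borel"
    unfolding hp_def hm_def by auto
  have hpm: "h x = hp x - hm x" for x unfolding hp_def hm_def by auto
  have ipp: "integrable M (\<lambda>\<omega>. g1 (Q \<omega>) * g2 (P \<omega>))"
    if "g1 = hp \<or> g1 = hm" "g2 = fp \<or> g2 = fm" for g1 g2
  proof (rule Bochner_Integration.integrable_bound[OF iFH])
    have [measurable]: "g1 \<in> borel_measurable borel" "g2 \<in> borel_measurable borel" using that by auto
    show "(\<lambda>\<omega>. g1 (Q \<omega>) * g2 (P \<omega>)) \<in> borel_measurable M" by measurable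
    show "AE \<omega> in M. norm (g1 (Q \<omega>) * g2 (P \<omega>)) \<le> norm (f (P \<omega>) * h (Q \<omega>))"
    proof -
      have a: "\<bar>g1 x\<bar> \<le> \<bar>h x\<bar>" "\<bar>g2 y\<bar> \<le> \<bar>f y\<bar>" for x y
        using that by (auto simp: hp_def hm_def fp_def fm_def)
      have "\<bar>g1 x * g2 y\<bar> \<le> \<bar>f y * h x\<bar>" for x y
        unfolding abs_mult using mult_mono[OF a(1)[of x] a(2)[of y]] by (simp add: mult.commute)
      then show ?thesis by auto
    qed
  qed
  have stepe: "(\<integral>\<omega>. g (Q \<omega>) * fp (P \<omega>) \<partial>M) = (\<integral>\<omega>. g (Q \<omega>) * fm (P \<omega>) \<partial>M)"
    if g: "g = hp \<or> g = hm" for g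
  proof (rule meas_ext_real[where N=borel and Y=Q and ?w1.0="\<lambda>\<omega>. fp (P \<omega>)" and ?w2.0="\<lambda>\<omega>. fm (P \<omega>)" and g=g])
    show [measurable]: "g \<in> borel_measurable borel" using g by auto
    show "\<And>x. 0 \<le> g x" using g by (auto simp: hp_def hm_def)
    show "AE \<omega> in M. 0 \<le> fp (P \<omega>)" "AE \<omega> in M. 0 \<le> fm (P \<omega>)" by (auto simp: fp_def fm_def)
    fix B :: "(real \<times> real) set" assume B[measurable]: "B \<in> sets borel"
    show i1: "integrable M (\<lambda>\<omega>. indicator B (Q \<omega>) * fp (P \<omega>))"
      using bndi[OF iFp(1) mQ B] by (simp add: mult.commute)
    show i2: "integrable M (\<lambda>\<omega>. indicator B (Q \<omega>) * fm (P \<omega>))"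
      using bndi[OF iFp(2) mQ B] by (simp add: mult.commute)
    have "0 = (\<integral>\<omega>. f (P \<omega>) * indicator B (Q \<omega>) \<partial>M)" using stepd[OF B] by simp
    also have "\<dots> = (\<integral>\<omega>. indicator B (Q \<omega>) * fp (P \<omega>) - indicator B (Q \<omega>) * fm (P \<omega>) \<partial>M)"
      by (simp add: fpm algebra_simps)
    also have "\<dots> = (\<integral>\<omega>. indicator B (Q \<omega>) * fp (P \<omega>) \<partial>M) - (\<integral>\<omega>. indicator B (Q \<omega>) * fm (P \<omega>) \<partial>M)"
      by (rule Bochner_Integration.integral_diff[OF i1 i2])
    finally show "(\<integral>\<omega>. indicator B (Q \<omega>) * fp (P \<omega>) \<partial>M) = (\<integral>\<omega>. indicator B (Q \<omega>) * fm (P \<omega>) \<partial>M)"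
      by simp
  next
    show "integrable M (\<lambda>\<omega>. g (Q \<omega>) * fp (P \<omega>))" by (rule ipp[OF g]) simp
    show "integrable M (\<lambda>\<omega>. g (Q \<omega>) * fm (P \<omega>))" by (rule ipp[OF g]) simp
  qed auto
  have "(\<integral>\<omega>. f (P \<omega>) * h (Q \<omega>) \<partial>M) =
     (\<integral>\<omega>. (hp (Q \<omega>) * fp (P \<omega>) - hp (Q \<omega>) * fm (P \<omega>)) - (hm (Q \<omega>) * fp (P \<omega>) - hm (Q \<omega>) * fm (P \<omega>)) \<partial>M)"
    by (simp add: fpm hpm algebra_simps)
  also have "\<dots> = ((\<integral>\<omega>. hp (Q \<omega>) * fp (P \<omega>) \<partial>M) - (\<integral>\<omega>. hp (Q \<omega>) * fm (P \<omega>) \<partial>M))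
      - ((\<integral>\<omega>. hm (Q \<omega>) * fp (P \<omega>) \<partial>M) - (\<integral>\<omega>. hm (Q \<omega>) * fm (P \<omega>) \<partial>M))"
    using ipp by (subst Bochner_Integration.integral_diff; (intro Bochner_Integration.integrable_diff)?; simp)+
  also have "\<dots> = 0" using stepe[of hp] stepe[of hm] by simp
  finally show ?thesis .
qed

lemma Tr_Suc: "Tr (Suc n) = Tr n \<union> Gen (Suc n)"
  unfolding Tr_def atMost_Suc by auto
lemma Tr_eq: "Tr n = {1..<2 ^ Suc n}"
proof (induction n)
  case 0 show ?case by (simp add: Tr_def Gen_def)
next
  case (Suc n)
  have "Tr (Suc n) = {1..<2 ^ Suc n} \<union> {2 ^ Suc n..<2 ^ Suc (Suc n)}"
    by (simp only: Tr_Suc Suc Gen_def)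
  also have "\<dots> = {1..<2 ^ Suc (Suc n)}"
    by (rule ivl_disj_un_two(3)) (simp_all only: one_le_power power_increasing)
  finally show ?case .
qed

lemma Gen_ge1: "k \<in> Gen m \<Longrightarrow> 1 \<le> k"
  unfolding Gen_def by (auto intro: order.trans[OF one_le_power])

lemma Gen_disj: "k \<in> Gen m \<Longrightarrow> k \<in> Gen m' \<Longrightarrow> m = m'"
proof -
  assume a: "k \<in> Gen m" "k \<in> Gen m'"
  { fix m m' :: nat assume a: "k \<in> Gen m" "k \<in> Gen m'" "m < m'"
    then have "2 ^ Suc m \<le> (2::nat) ^ m'" by (intro power_increasing) auto
    with a have False by (auto simp: Gen_def) }
  with a show ?thesis by (metis linorder_neqE_nat)
qed

lemma Gen_double: "k \<in> Gen m \<Longrightarrow> 2 * k \<in> Gen (Suc m) \<and> 2 * k + 1 \<in> Gen (Suc m)"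
  unfolding Gen_def by auto

lemma Gen_half: "k \<in> Gen (Suc m) \<Longrightarrow> k div 2 \<in> Gen m"
  unfolding Gen_def by auto

lemma Gen_Suc_Ty0: "Gen (Suc m) \<inter> Ty 0 = (\<lambda>k. 2 * k) ` Gen m"
proof safe
  fix k assume k: "k \<in> Gen (Suc m)" "k \<in> Ty 0"
  then have "k = 2 * (k div 2)" by (auto simp: Ty_def)
  then show "k \<in> (\<lambda>k. 2 * k) ` Gen m" using Gen_half[OF k(1)] by blast
next
  fix k assume "k \<in> Gen m"
  then show "2 * k \<in> Gen (Suc m)" "2 * k \<in> Ty 0" using Gen_double Gen_ge1 by (auto simp: Ty_def)
qed

lemma Gen_Suc_Ty1: "Gen (Suc m) \<inter> Ty 1 = (\<lambda>k. 2 * k + 1) ` Gen m"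
proof safe
  fix k assume k: "k \<in> Gen (Suc m)" "k \<in> Ty 1"
  then have "k mod 2 = 1" by (simp add: Ty_def)
  then have "k = 2 * (k div 2) + 1" by presburger
  then show "k \<in> (\<lambda>k. 2 * k + 1) ` Gen m" using Gen_half[OF k(1)] by blast
next
  fix k assume "k \<in> Gen m"
  then show "2 * k + 1 \<in> Gen (Suc m)" "2 * k + 1 \<in> Ty 1" using Gen_double by (auto simp: Ty_def)
qed

lemma finite_Gen[simp]: "finite (Gen m)" by (simp add: Gen_def)
lemma finite_Tr[simp]: "finite (Tr m)" by (simp add: Tr_eq)

definition Kset :: "nat \<Rightarrow> nat \<Rightarrow> nat set" where
  "Kset i n = Tr n \<inter> Ty i - Tr 0"

lemma Kset_0: "Kset i 0 = {}" by (simp add: Kset_def)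

lemma Kset_Suc: "Kset i (Suc n) = Kset i n \<union> (Gen (Suc n) \<inter> Ty i)"
  and Kset_disj: "Kset i n \<inter> (Gen (Suc n) \<inter> Ty i) = {}"
proof -
  have "Tr (Suc n) = Tr n \<union> Gen (Suc n)" by (rule Tr_Suc)
  moreover have "Gen (Suc n) \<inter> Tr 0 = {}"
  proof -
    have "(2::nat) \<le> 2 ^ Suc n" by simp
    then show ?thesis unfolding Tr_eq Gen_def by auto
  qed
  moreover have "Gen (Suc n) \<inter> Tr n = {}"
    unfolding Tr_eq Gen_def by auto
  ultimately show "Kset i (Suc n) = Kset i n \<union> (Gen (Suc n) \<inter> Ty i)"
    "Kset i n \<inter> (Gen (Suc n) \<inter> Ty i) = {}"
    unfolding Kset_def by blast+
qed

lemma finite_Kset[simp]: "finite (Kset i n)" by (simp add: Kset_def)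

lemma Kset_Gen: "k \<in> Kset i n \<Longrightarrow> \<exists>m<n. k \<in> Gen (Suc m)"
proof (induction n)
  case 0 then show ?case by (simp add: Kset_0)
next
  case (Suc n) then show ?case unfolding Kset_Suc by (auto intro: less_SucI)
qed

lemma Kset_Ty: "k \<in> Kset i n \<Longrightarrow> k \<in> Ty i" by (simp add: Kset_def)
lemma Kset_ge2: "k \<in> Kset i n \<Longrightarrow> 2 \<le> k" by (auto simp: Kset_def Tr_eq)

lemma Gen_sub_Tr: "m \<le> n \<Longrightarrow> Gen m \<subseteq> Tr n" by (auto simp: Tr_def)

lemma sum_Kset: "(\<Sum>k\<in>Kset i n. f k) = (\<Sum>m<n. \<Sum>k\<in>Gen (Suc m) \<inter> Ty i. f k)"
proof (induction n)
  case 0 then show ?case by (simp add: Kset_0)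
next
  case (Suc n) then show ?case
    by (simp add: Kset_Suc sum.union_disjoint Kset_disj)
qed

lemma delta_1: "delta \<zeta> 1 \<omega> = 1" by (subst delta.simps) simp
lemma delta_even: "1 \<le> k \<Longrightarrow> delta \<zeta> (2*k) \<omega> = delta \<zeta> k \<omega> * fst (\<zeta> k \<omega>)"
  by (subst delta.simps) auto
lemma delta_odd: "1 \<le> k \<Longrightarrow> delta \<zeta> (2*k+1) \<omega> = delta \<zeta> k \<omega> * snd (\<zeta> k \<omega>)"
  by (subst delta.simps) auto

lemma delta_local:
  "(\<And>j. 1 \<le> j \<Longrightarrow> j < k \<Longrightarrow> \<zeta>1 j \<omega>1 = \<zeta>2 j \<omega>2) \<Longrightarrow> delta \<zeta>1 k \<omega>1 = delta \<zeta>2 k \<omega>2"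
proof (induction k rule: less_induct)
  case (less k)
  show ?case
  proof (cases "k \<le> 1")
    case True then show ?thesis by (subst (1 2) delta.simps) simp
  next
    case False
    then have h: "1 \<le> k div 2" "k div 2 < k" by auto
    have "delta \<zeta>1 (k div 2) \<omega>1 = delta \<zeta>2 (k div 2) \<omega>2"
      using less.IH[OF h(2)] less.prems h by simp
    moreover have "\<zeta>1 (k div 2) \<omega>1 = \<zeta>2 (k div 2) \<omega>2" using less.prems h by auto
    ultimately show ?thesis using False by (subst (1 2) delta.simps) simp
  qed
qed

lemma delta_01: "(\<And>j. \<zeta> j \<omega> \<in> {0,1} \<times> {0,1}) \<Longrightarrow> delta \<zeta> k \<omega> \<in> {0, 1}"
proof (induction k rule: less_induct)
  case (less k)
  show ?case
  proof (cases "k \<le> 1")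
    case True then show ?thesis by (subst delta.simps) simp
  next
    case False
    then have h: "delta \<zeta> (k div 2) \<omega> \<in> {0,1}" using less.IH[of "k div 2"] less.prems by simp
    have "\<zeta> (k div 2) \<omega> \<in> {0,1} \<times> {0,1}" by (rule less.prems)
    then have h2: "(if even k then fst (\<zeta> (k div 2) \<omega>) else snd (\<zeta> (k div 2) \<omega>)) \<in> {0,1}"
      by (auto split: if_splits)
    have "delta \<zeta> k \<omega> = delta \<zeta> (k div 2) \<omega> * (if even k then fst (\<zeta> (k div 2) \<omega>) else snd (\<zeta> (k div 2) \<omega>))"
      using False by (subst delta.simps) simp
    then show ?thesis using h h2 by auto
  qed
qed

locale BLoc =

  fixes M :: "'a measure"
    and X \<epsilon> :: "nat \<Rightarrow> 'a \<Rightarrow> real"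
    and \<zeta> :: "nat \<Rightarrow> 'a \<Rightarrow> nat \<times> nat"
    and p :: "nat \<Rightarrow> nat \<Rightarrow> nat \<Rightarrow> real"
    and a b c d \<sigma>2 \<tau>4 \<kappa>8 \<rho> \<rho>' \<nu>2 lam4 \<pi> :: real
    and z :: "nat \<Rightarrow> real"
    and W :: "'a \<Rightarrow> real"
    and i :: nat
  assumes prob: "prob_space M"
    and X_meas: "\<And>k. X k \<in> borel_measurable M"
    and eps_meas: "\<And>k. \<epsilon> k \<in> borel_measurable M"
    and X1_L8: "integrable M (\<lambda>\<omega>. X 1 \<omega> ^ 8)"
    and bar0: "\<And>k \<omega>. k \<ge> 1 \<Longrightarrow> \<omega> \<in> space M \<Longrightarrow> X (2*k) \<omega> = a + b * X k \<omega> + \<epsilon> (2*k) \<omega>"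
    and bar1: "\<And>k \<omega>. k \<ge> 1 \<Longrightarrow> \<omega> \<in> space M \<Longrightarrow> X (2*k+1) \<omega> = c + d * X k \<omega> + \<epsilon> (2*k+1) \<omega>"
    and bd: "0 < max \<bar>b\<bar> \<bar>d\<bar>" "max \<bar>b\<bar> \<bar>d\<bar> < 1"
    and params: "\<sigma>2 > 0" "\<tau>4 > 0" "\<kappa>8 > 0" "\<rho> = \<rho>' * \<sigma>2" "\<bar>\<rho>'\<bar> < 1"
      "0 \<le> \<nu>2" "\<nu>2 < 1" "0 \<le> lam4" "lam4 < 1"
    and eps_L8: "\<And>n k. k \<in> Gen (Suc n) \<Longrightarrow> integrable M (\<lambda>\<omega>. \<epsilon> k \<omega> ^ 8)"
    and ce1: "\<And>n k. k \<in> Gen (Suc n) \<Longrightarrow>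
      AE \<omega> in M. real_cond_exp M (natF M X n) (\<epsilon> k) \<omega> = 0"
    and ce2: "\<And>n k. k \<in> Gen (Suc n) \<Longrightarrow>
      AE \<omega> in M. real_cond_exp M (natF M X n) (\<lambda>\<omega>. \<epsilon> k \<omega> ^ 2) \<omega> = \<sigma>2"
    and ce4: "\<And>n k. k \<in> Gen (Suc n) \<Longrightarrow>
      AE \<omega> in M. real_cond_exp M (natF M X n) (\<lambda>\<omega>. \<epsilon> k \<omega> ^ 4) \<omega> = \<tau>4"
    and ce8: "\<And>n k. k \<in> Gen (Suc n) \<Longrightarrow>
      AE \<omega> in M. real_cond_exp M (natF M X n) (\<lambda>\<omega>. \<epsilon> k \<omega> ^ 8) \<omega> = \<kappa>8"
    and cc1: "\<And>n k. k \<in> Gen n \<Longrightarrow>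
      AE \<omega> in M. real_cond_exp M (natF M X n) (\<lambda>\<omega>. \<epsilon> (2*k) \<omega> * \<epsilon> (2*k+1) \<omega>) \<omega> = \<rho>"
    and cc2: "\<And>n k. k \<in> Gen n \<Longrightarrow>
      AE \<omega> in M. real_cond_exp M (natF M X n)
        (\<lambda>\<omega>. \<epsilon> (2*k) \<omega> ^ 2 * \<epsilon> (2*k+1) \<omega> ^ 2) \<omega> = \<nu>2 * \<tau>4"
    and cc4: "\<And>n k. k \<in> Gen n \<Longrightarrow>
      AE \<omega> in M. real_cond_exp M (natF M X n)
        (\<lambda>\<omega>. \<epsilon> (2*k) \<omega> ^ 4 * \<epsilon> (2*k+1) \<omega> ^ 4) \<omega> = lam4 * \<kappa>8"
    and cind: (* conditional independence of a family = of each finite subfamily *) "\<And>n J B. J \<subseteq> Gen n \<Longrightarrow> (\<And>k. k \<in> J \<Longrightarrow> B k \<in> sets (borel :: (real \<times> real) measure)) \<Longrightarrow>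
      AE \<omega> in M. real_cond_exp M (natF M X n)
          (\<lambda>\<omega>. \<Prod>k\<in>J. indicator (B k) (\<epsilon> (2*k) \<omega>, \<epsilon> (2*k+1) \<omega>)) \<omega>
        = (\<Prod>k\<in>J. real_cond_exp M (natF M X n)
             (\<lambda>\<omega>. indicator (B k) (\<epsilon> (2*k) \<omega>, \<epsilon> (2*k+1) \<omega>)) \<omega>)"
    and zeta_val: "\<And>k \<omega>. \<omega> \<in> space M \<Longrightarrow> \<zeta> k \<omega> \<in> {0,1} \<times> {0,1}"
    and zeta_indep: "prob_space.indep_vars M (\<lambda>_. count_space UNIV) \<zeta> {1..}"
    and zeta_law: "\<And>k j0 j1. k \<ge> 1 \<Longrightarrow>
      measure M {\<omega> \<in> space M. \<zeta> k \<omega> = (j0, j1)} = p (k mod 2) j0 j1"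
    and P_pos: "\<And>i' (j::nat). i' \<le> 1 \<Longrightarrow> j \<le> 1 \<Longrightarrow>
      0 < (if j = 0 then p i' 1 0 + p i' 1 1 else p i' 0 1 + p i' 1 1)"
    and pi_def: "\<pi> = perron_eig (p 0 1 0 + p 0 1 1) (p 0 0 1 + p 0 1 1)
                                (p 1 1 0 + p 1 1 1) (p 1 0 1 + p 1 1 1)"
    and pi_gt1: "\<pi> > 1"
    and z_pos: "z 0 > 0" "z 1 > 0" "z 0 + z 1 = 1"
    and z_eig0: "z 0 * (p 0 1 0 + p 0 1 1) + z 1 * (p 1 1 0 + p 1 1 1) = \<pi> * z 0"
    and z_eig1: "z 0 * (p 0 0 1 + p 0 1 1) + z 1 * (p 1 0 1 + p 1 1 1) = \<pi> * z 1"
    and HI: "prob_space.indep_set M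
      (gen_events M (PiM {1..} (\<lambda>_. count_space (UNIV :: (nat \<times> nat) set)))
         (\<lambda>\<omega>. restrict (\<lambda>k. \<zeta> k \<omega>) {1..}))
      (gen_events M (PiM {1..} (\<lambda>_. borel \<Otimes>\<^sub>M borel))
         (\<lambda>\<omega>. restrict (\<lambda>k. (X k \<omega>, \<epsilon> k \<omega>)) {1..}))"
    and W_meas: "W \<in> borel_measurable M"
    and W_nonneg: "\<And>\<omega>. \<omega> \<in> space M \<Longrightarrow> W \<omega> \<ge> 0"
    and W_lim: "AE \<omega> in M. \<forall>j\<in>{0,1}.
      (\<lambda>n. real (Zcount \<zeta> n j \<omega>) / \<pi> ^ n) \<longlonglongrightarrow> W \<omega> * z j"
    and i01: "i \<in> {0, 1}"
begin

sublocale ps: prob_space M by (rule prob)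

lemma natF_space: "space (natF M X n) = space M"
  unfolding natF_def by (rule space_measure_of_conv)

lemma natF_gen_sub: "{X k -` B \<inter> space M | k B. k \<in> Tr n \<and> B \<in> sets borel} \<subseteq> Pow (space M)"
  by auto

lemma natF_sets: "sets (natF M X n) = sigma_sets (space M) {X k -` B \<inter> space M | k B. k \<in> Tr n \<and> B \<in> sets borel}"
  unfolding natF_def by (rule sets_measure_of[OF natF_gen_sub])

lemma natF_subalg: "subalgebra M (natF M X n)"
  unfolding subalgebra_def
proof
  show "sets (natF M X n) \<subseteq> sets M"
    unfolding natF_sets
    by (rule sets.sigma_sets_subset) (auto intro: measurable_sets[OF X_meas])
  show "space (natF M X n) = space M" by (rule natF_space)
qed

lemma natF_sf: "sigma_finite_subalgebra M (natF M X n)"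
  by (rule finite_measure_subalgebra_is_sigma_finite)
     (simp add: finite_measure_subalgebra_def finite_measure_subalgebra_axioms_def natF_subalg ps.finite_measure_axioms)

lemma X_natF: "k \<in> Tr n \<Longrightarrow> X k \<in> borel_measurable (natF M X n)"
proof (rule measurableI)
  fix x assume "x \<in> space (natF M X n)" then show "X k x \<in> space borel" by simp
next
  fix B :: "real set" assume "k \<in> Tr n" "B \<in> sets borel"
  then have "X k -` B \<inter> space M \<in> {X k -` B \<inter> space M | k B. k \<in> Tr n \<and> B \<in> sets borel}" by blast
  then show "X k -` B \<inter> space (natF M X n) \<in> sets (natF M X n)"
    unfolding natF_sets natF_space by (rule sigma_sets.Basic)
qed

lemma eps_natF: assumes "k \<in> Tr n" "2 \<le> k" shows "\<epsilon> k \<in> borel_measurable (natF M X n)"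
proof -
  have kh: "k div 2 \<in> Tr n" "1 \<le> k div 2" using assms by (auto simp: Tr_eq)
  note [measurable] = X_natF[OF assms(1)] X_natF[OF kh(1)]
  show ?thesis
  proof (cases "even k")
    case True
    then obtain j where j: "k = 2 * j" by blast
    have "\<epsilon> k \<omega> = X k \<omega> - a - b * X (k div 2) \<omega>" if "\<omega> \<in> space (natF M X n)" for \<omega>
      using bar0[of j \<omega>] that kh j by (simp add: natF_space)
    then show ?thesis by (subst measurable_cong) auto
  next
    case False
    then obtain j where j: "k = 2 * j + 1" using oddE by blast
    have "\<epsilon> k \<omega> = X k \<omega> - c - d * X (k div 2) \<omega>" if "\<omega> \<in> space (natF M X n)" for \<omega>
      using bar1[of j \<omega>] that kh j by (simp add: natF_space)
    then show ?thesis by (subst measurable_cong) auto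
  qed
qed

lemma zeta_rv: "1 \<le> k \<Longrightarrow> \<zeta> k \<in> measurable M (count_space UNIV)"
  using zeta_indep unfolding ps.indep_vars_def by auto

definition Y1 where "Y1 \<omega> = restrict (\<lambda>k. \<zeta> k \<omega>) {1..}"
definition Y2 where "Y2 \<omega> = restrict (\<lambda>k. (X k \<omega>, \<epsilon> k \<omega>)) {1..}"

lemma Y1_meas: "Y1 \<in> measurable M (PiM {1..} (\<lambda>_. count_space (UNIV :: (nat \<times> nat) set)))"
  unfolding Y1_def by (rule measurable_restrict) (auto intro: zeta_rv)

lemma Y2_meas: "Y2 \<in> measurable M (PiM {1..} (\<lambda>_. borel \<Otimes>\<^sub>M borel))"
  unfolding Y2_def by (rule measurable_restrict) (auto intro!: measurable_Pair X_meas eps_meas)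

end

definition dd :: "nat \<Rightarrow> (nat \<Rightarrow> nat \<times> nat) \<Rightarrow> real" where
  "dd k x = real (delta (\<lambda>j _. x j) k ())"

lemma dd_meas: "{1..<k} \<subseteq> S \<Longrightarrow> dd k \<in> borel_measurable (PiM S (\<lambda>_. count_space UNIV))"
proof (induction k rule: less_induct)
  case (less k)
  show ?case
  proof (cases "k \<le> 1")
    case True
    then have "dd k = (\<lambda>_. 1)" unfolding dd_def by (intro ext) (subst delta.simps, simp)
    then show ?thesis by simp
  next
    case False
    then have h: "k div 2 < k" "1 \<le> k div 2" "k div 2 \<in> S" using less.prems by auto
    have "{1..<k div 2} \<subseteq> {1..<k}" by auto
    then have "{1..<k div 2} \<subseteq> S" using less.prems by blast
    then have IH: "dd (k div 2) \<in> borel_measurable (PiM S (\<lambda>_. count_space UNIV))"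
      using less.IH[OF h(1)] by blast
    have "dd k = (\<lambda>x. dd (k div 2) x * real (if even k then fst (x (k div 2)) else snd (x (k div 2))))"
      unfolding dd_def using False by (intro ext) (subst delta.simps, simp)
    moreover have "(\<lambda>x. real (if even k then fst (x (k div 2)) else snd (x (k div 2))))
        \<in> borel_measurable (PiM S (\<lambda>_. count_space (UNIV :: (nat \<times> nat) set)))"
      by (rule measurable_compose[OF measurable_component_singleton[OF h(3)]]) simp
    ultimately show ?thesis using IH by simp
  qed
qed

context BLoc begin

lemma delta_dd: "{1..<k} \<subseteq> S \<Longrightarrow> real (delta \<zeta> k \<omega>) = dd k (restrict (\<lambda>j. \<zeta> j \<omega>) S)"
proof -
  assume S: "{1..<k} \<subseteq> S"
  have "delta \<zeta> k \<omega> = delta (\<lambda>j _. restrict (\<lambda>j. \<zeta> j \<omega>) S j) k ()"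
    by (rule delta_local) (use S in auto)
  then show ?thesis unfolding dd_def by simp
qed

lemma restr_meas: "S \<subseteq> {1..} \<Longrightarrow> (\<lambda>\<omega>. restrict (\<lambda>j. \<zeta> j \<omega>) S) \<in> measurable M (PiM S (\<lambda>_. count_space UNIV))"
  by (rule measurable_restrict) (auto intro!: zeta_rv)

lemma D_meas[measurable]: "(\<lambda>\<omega>. real (delta \<zeta> k \<omega>)) \<in> borel_measurable M"
proof -
  have "(\<lambda>\<omega>. dd k (restrict (\<lambda>j. \<zeta> j \<omega>) {1..<k})) \<in> borel_measurable M"
    by (rule measurable_compose[OF restr_meas dd_meas]) auto
  then show ?thesis by (simp add: delta_dd[of k "{1..<k}"])
qed

lemma D01: "\<omega> \<in> space M \<Longrightarrow> delta \<zeta> k \<omega> \<in> {0, 1}"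
  by (rule delta_01) (rule zeta_val)

lemma zeta_meas_fun[measurable]: "1 \<le> k \<Longrightarrow> (\<lambda>\<omega>. (f (\<zeta> k \<omega>) :: real)) \<in> borel_measurable M"
  by (rule measurable_compose[OF zeta_rv]) auto

lemma bounded_int: fixes f :: "'a \<Rightarrow> real" and B :: real shows "f \<in> borel_measurable M \<Longrightarrow> (\<And>\<omega>. \<omega> \<in> space M \<Longrightarrow> \<bar>f \<omega>\<bar> \<le> B) \<Longrightarrow> integrable M f"
  by (rule ps.integrable_const_bound[where B=B]) auto

lemma zeta_split:
  fixes G :: "(nat \<Rightarrow> nat \<times> nat) \<Rightarrow> real" and H :: "nat \<times> nat \<Rightarrow> real"
  assumes l: "1 \<le> l" and Gm: "G \<in> borel_measurable (PiM {1..<l} (\<lambda>_. count_space UNIV))"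
    and iG: "integrable M (\<lambda>\<omega>. G (restrict (\<lambda>j. \<zeta> j \<omega>) {1..<l}))"
    and iH: "integrable M (\<lambda>\<omega>. H (\<zeta> l \<omega>))"
  shows "(\<integral>\<omega>. G (restrict (\<lambda>j. \<zeta> j \<omega>) {1..<l}) * H (\<zeta> l \<omega>) \<partial>M)
       = (\<integral>\<omega>. G (restrict (\<lambda>j. \<zeta> j \<omega>) {1..<l}) \<partial>M) * (\<integral>\<omega>. H (\<zeta> l \<omega>) \<partial>M)"
proof -
  have iv: "ps.indep_var (PiM {1..<l} (\<lambda>_. count_space UNIV)) (\<lambda>\<omega>. restrict (\<lambda>j. \<zeta> j \<omega>) {1..<l})
      (PiM {l} (\<lambda>_. count_space UNIV)) (\<lambda>\<omega>. restrict (\<lambda>j. \<zeta> j \<omega>) {l})"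
    by (rule ps.indep_var_restrict[OF zeta_indep]) (use l in auto)
  have Hm: "(\<lambda>x. H (x l)) \<in> borel_measurable (PiM {l} (\<lambda>_. count_space (UNIV :: (nat \<times> nat) set)))"
    by (rule measurable_compose[OF measurable_component_singleton]) auto
  have iv2: "ps.indep_var borel (G \<circ> (\<lambda>\<omega>. restrict (\<lambda>j. \<zeta> j \<omega>) {1..<l})) borel ((\<lambda>x. H (x l)) \<circ> (\<lambda>\<omega>. restrict (\<lambda>j. \<zeta> j \<omega>) {l}))"
    by (rule ps.indep_var_compose[OF iv Gm Hm])
  have e: "((\<lambda>x. H (x l)) \<circ> (\<lambda>\<omega>. restrict (\<lambda>j. \<zeta> j \<omega>) {l})) = (\<lambda>\<omega>. H (\<zeta> l \<omega>))" by (auto simp: o_def)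
  have iv3: "ps.indep_var borel (\<lambda>\<omega>. G (restrict (\<lambda>j. \<zeta> j \<omega>) {1..<l})) borel (\<lambda>\<omega>. H (\<zeta> l \<omega>))"
    using iv2 unfolding e by (simp add: o_def)
  show ?thesis by (rule ps.indep_var_lebesgue_integral[OF iv3 iG iH])
qed

lemma zeta_set: "1 \<le> k \<Longrightarrow> {\<omega> \<in> space M. \<zeta> k \<omega> = v} \<in> sets M"
  using measurable_sets[OF zeta_rv, of k "{v}"] by (simp add: vimage_def Int_def conj_commute)

lemma E_zeta_fun:
  assumes k: "1 \<le> k" and f01: "\<And>v. v \<in> {0,1} \<times> {0,1} \<Longrightarrow> f v \<in> {0,1}" and S: "\<And>v. v \<in> {0,1} \<times> {0,1} \<Longrightarrow> f v = 1 \<longleftrightarrow> v \<in> V"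
  and V: "V \<subseteq> {0,1} \<times> {0,1}"
  shows "(\<integral>\<omega>. real (f (\<zeta> k \<omega>)) \<partial>M) = (\<Sum>v\<in>V. p (k mod 2) (fst v) (snd v))"
proof -
  have fin: "finite V" using V by (rule finite_subset) auto
  have "(\<integral>\<omega>. real (f (\<zeta> k \<omega>)) \<partial>M) = (\<integral>\<omega>. (\<Sum>v\<in>V. indicator {\<omega> \<in> space M. \<zeta> k \<omega> = v} \<omega>) \<partial>M)"
  proof (rule Bochner_Integration.integral_cong)
    fix \<omega> assume w: "\<omega> \<in> space M"
    have zv: "\<zeta> k \<omega> \<in> {0,1} \<times> {0,1}" by (rule zeta_val[OF w])
    have "(\<Sum>v\<in>V. indicator {\<omega> \<in> space M. \<zeta> k \<omega> = v} \<omega> :: real) = (\<Sum>v\<in>V. if v = \<zeta> k \<omega> then 1 else 0)"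
      using w by (intro sum.cong) (auto simp: indicator_def)
    also have "\<dots> = (if \<zeta> k \<omega> \<in> V then 1 else 0)" using fin by (simp add: sum.delta)
    also have "\<dots> = real (f (\<zeta> k \<omega>))" using S[OF zv] f01[OF zv] by auto
    finally show "real (f (\<zeta> k \<omega>)) = (\<Sum>v\<in>V. indicator {\<omega> \<in> space M. \<zeta> k \<omega> = v} \<omega>)" by simp
  qed simp
  also have "\<dots> = (\<Sum>v\<in>V. (\<integral>\<omega>. indicator {\<omega> \<in> space M. \<zeta> k \<omega> = v} \<omega> \<partial>M))"
    by (rule Bochner_Integration.integral_sum) (auto intro!: integrable_real_indicator zeta_set k simp: ps.emeasure_space_1 less_top[symmetric])
  also have "\<dots> = (\<Sum>v\<in>V. p (k mod 2) (fst v) (snd v))"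
    by (intro sum.cong refl) (auto simp: zeta_set[OF k] zeta_law[OF k, symmetric])
  finally show ?thesis .
qed

end

definition Pm :: "(nat \<Rightarrow> nat \<Rightarrow> nat \<Rightarrow> real) \<Rightarrow> nat \<Rightarrow> nat \<Rightarrow> real" where
  "Pm p i j = (if j = 0 then p i 1 0 + p i 1 1 else p i 0 1 + p i 1 1)"

context BLoc begin

definition ED where "ED k = (\<integral>\<omega>. real (delta \<zeta> k \<omega>) \<partial>M)"

lemma D_int: "integrable M (\<lambda>\<omega>. real (delta \<zeta> k \<omega>))"
  by (rule bounded_int[where B=1]) (auto dest: D01[of _ k])

lemma ED_nonneg: "0 \<le> ED k" unfolding ED_def by simp

lemma ED_1: "ED 1 = 1" unfolding ED_def delta_1 by (simp add: ps.prob_space)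

lemma p_nonneg: "i' \<le> 1 \<Longrightarrow> 0 \<le> p i' j0 j1"
proof -
  assume "i' \<le> 1"
  then have "i' = 0 \<or> i' = 1" by auto
  then obtain k where "1 \<le> k" "k mod 2 = i'" by (metis le_numeral_extra(4) nat_1_add_1 mod_self one_le_numeral mod_less one_less_numeral_iff semiring_norm(76))
  then show ?thesis using zeta_law[of k j0 j1] measure_nonneg by metis
qed

lemma ED_child:
  assumes k: "1 \<le> k" and j: "j \<le> 1"
  shows "ED (2 * k + j) = ED k * Pm p (k mod 2) j"
proof -
  define f :: "nat \<times> nat \<Rightarrow> nat" where "f v = (if j = 0 then fst v else snd v)" for v
  have dk: "real (delta \<zeta> (2 * k + j) \<omega>) = dd k (restrict (\<lambda>j. \<zeta> j \<omega>) {1..<k}) * real (f (\<zeta> k \<omega>))" for \<omega>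
  proof -
    have "j = 0 \<or> j = 1" using j by auto
    then have "delta \<zeta> (2 * k + j) \<omega> = delta \<zeta> k \<omega> * f (\<zeta> k \<omega>)"
    proof
      assume "j = 0" then show ?thesis using delta_even[OF k] by (simp add: f_def)
    next
      assume "j = 1" then show ?thesis using delta_odd[OF k] by (simp add: f_def)
    qed
    then show ?thesis by (simp only: delta_dd[of k "{1..<k}", OF order_refl] of_nat_mult)
  qed
  have "ED (2 * k + j) = (\<integral>\<omega>. dd k (restrict (\<lambda>j. \<zeta> j \<omega>) {1..<k}) * real (f (\<zeta> k \<omega>)) \<partial>M)"
    unfolding ED_def dk ..
  also have "\<dots> = (\<integral>\<omega>. dd k (restrict (\<lambda>j. \<zeta> j \<omega>) {1..<k}) \<partial>M) * (\<integral>\<omega>. real (f (\<zeta> k \<omega>)) \<partial>M)"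
  proof (rule zeta_split[OF k])
    show "dd k \<in> borel_measurable (Pi\<^sub>M {1..<k} (\<lambda>_. count_space UNIV))" by (rule dd_meas) simp
    show "integrable M (\<lambda>\<omega>. dd k (restrict (\<lambda>j. \<zeta> j \<omega>) {1..<k}))"
      using D_int[of k] by (simp only: delta_dd[of k "{1..<k}", OF order_refl])
    show "integrable M (\<lambda>\<omega>. real (f (\<zeta> k \<omega>)))"
    proof (rule bounded_int[where B=1])
      fix \<omega> assume "\<omega> \<in> space M"
      then have "fst (\<zeta> k \<omega>) \<le> 1 \<and> snd (\<zeta> k \<omega>) \<le> 1" using zeta_val[of \<omega> k] by (auto simp: mem_Times_iff)
      then show "\<bar>real (f (\<zeta> k \<omega>))\<bar> \<le> 1" by (auto simp: f_def)
    qed (rule zeta_meas_fun[where f="\<lambda>v. real (f v)", OF k])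
  qed
  also have "(\<integral>\<omega>. dd k (restrict (\<lambda>j. \<zeta> j \<omega>) {1..<k}) \<partial>M) = ED k"
    unfolding ED_def by (simp only: delta_dd[of k "{1..<k}", OF order_refl])
  also have "(\<integral>\<omega>. real (f (\<zeta> k \<omega>)) \<partial>M) = Pm p (k mod 2) j"
  proof (cases "j = 0")
    case True
    have "(\<integral>\<omega>. real (f (\<zeta> k \<omega>)) \<partial>M) = (\<Sum>v\<in>{(1,0),(1,1)}. p (k mod 2) (fst v) (snd v))"
      by (rule E_zeta_fun[OF k]) (auto simp: f_def True)
    then show ?thesis by (simp add: Pm_def True)
  next
    case False
    have "(\<integral>\<omega>. real (f (\<zeta> k \<omega>)) \<partial>M) = (\<Sum>v\<in>{(0,1),(1,1)}. p (k mod 2) (fst v) (snd v))"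
      by (rule E_zeta_fun[OF k]) (auto simp: f_def False)
    then show ?thesis by (simp add: Pm_def False)
  qed
  finally show ?thesis .
qed

definition EG where "EG m j = (\<Sum>k\<in>Gen m \<inter> Ty j. ED k)"

lemma EG_Suc: "j \<le> 1 \<Longrightarrow> EG (Suc m) j = EG m 0 * Pm p 0 j + EG m 1 * Pm p 1 j"
proof -
  assume j: "j \<le> 1"
  have "j = 0 \<or> j = 1" using j by auto
  then have "Gen (Suc m) \<inter> Ty j = (\<lambda>k. 2 * k + j) ` Gen m"
    using Gen_Suc_Ty0[of m] Gen_Suc_Ty1[of m] by (elim disjE) simp_all
  then have "EG (Suc m) j = (\<Sum>k\<in>Gen m. ED (2 * k + j))"
    unfolding EG_def by (simp add: sum.reindex inj_on_def)
  also have "\<dots> = (\<Sum>k\<in>Gen m. ED k * Pm p (k mod 2) j)"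
    by (intro sum.cong refl ED_child j) (auto dest: Gen_ge1)
  also have "Gen m = (Gen m \<inter> Ty 0) \<union> (Gen m \<inter> Ty 1)"
    by (auto simp: Ty_def dest: Gen_ge1)
  also have "(\<Sum>k\<in>(Gen m \<inter> Ty 0) \<union> (Gen m \<inter> Ty 1). ED k * Pm p (k mod 2) j)
      = (\<Sum>k\<in>Gen m \<inter> Ty 0. ED k * Pm p (k mod 2) j) + (\<Sum>k\<in>Gen m \<inter> Ty 1. ED k * Pm p (k mod 2) j)"
    by (rule sum.union_disjoint) (auto simp: Ty_def)
  also have "(\<Sum>k\<in>Gen m \<inter> Ty 0. ED k * Pm p (k mod 2) j) = EG m 0 * Pm p 0 j"
    unfolding EG_def sum_distrib_right by (intro sum.cong refl) (auto simp: Ty_def)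
  also have "(\<Sum>k\<in>Gen m \<inter> Ty 1. ED k * Pm p (k mod 2) j) = EG m 1 * Pm p 1 j"
    unfolding EG_def sum_distrib_right by (intro sum.cong refl) (auto simp: Ty_def)
  finally show ?thesis .
qed

lemma Pm_nonneg: "i' \<le> 1 \<Longrightarrow> 0 \<le> Pm p i' j"
  unfolding Pm_def using p_nonneg by (auto intro: add_nonneg_nonneg)

lemma EG_bound: "j \<le> 1 \<Longrightarrow> EG m j \<le> \<pi> ^ m * z j / z 1"
proof (induction m arbitrary: j)
  case 0
  have "Gen 0 = {1}" unfolding Gen_def by auto
  have "j = 0 \<or> j = 1" using 0 by auto
  then show ?case
  proof
    assume j: "j = 0"
    have "Gen 0 \<inter> Ty 0 = {}" using \<open>Gen 0 = {1}\<close> by (auto simp: Ty_def)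
    then show ?case using z_pos j by (simp add: EG_def)
  next
    assume j: "j = 1"
    have "Gen 0 \<inter> Ty 1 = {1}" using \<open>Gen 0 = {1}\<close> by (auto simp: Ty_def)
    moreover have "ED (Suc 0) = 1" using ED_1 by simp
    ultimately show ?case using z_pos j by (simp add: EG_def)
  qed
next
  case (Suc m)
  have "EG (Suc m) j = EG m 0 * Pm p 0 j + EG m 1 * Pm p 1 j" by (rule EG_Suc[OF Suc.prems])
  also have "\<dots> \<le> (\<pi> ^ m * z 0 / z 1) * Pm p 0 j + (\<pi> ^ m * z 1 / z 1) * Pm p 1 j"
    by (intro add_mono mult_right_mono Suc.IH Pm_nonneg) auto
  also have "\<dots> = \<pi> ^ m / z 1 * (z 0 * Pm p 0 j + z 1 * Pm p 1 j)" by (simp add: field_simps)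
  also have "z 0 * Pm p 0 j + z 1 * Pm p 1 j = \<pi> * z j"
  proof -
    have "j = 0 \<or> j = 1" using Suc.prems by auto
    then show ?thesis using z_eig0 z_eig1 by (elim disjE) (simp_all add: Pm_def)
  qed
  finally show ?case by (simp add: field_simps)
qed

lemma geo_bound: "(\<Sum>m<n. \<pi> ^ Suc m) \<le> \<pi> ^ Suc n / (\<pi> - 1)"
proof (induction n)
  case 0 then show ?case using pi_gt1 by simp
next
  case (Suc n)
  have "(\<Sum>m<Suc n. \<pi> ^ Suc m) \<le> \<pi> ^ Suc n / (\<pi> - 1) + \<pi> ^ Suc n" using Suc by simp
  also have "\<dots> = \<pi> ^ Suc (Suc n) / (\<pi> - 1)" using pi_gt1 by (simp add: field_simps)
  finally show ?case .
qed

definition CK where "CK = \<pi> / ((\<pi> - 1) * z 1)"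

lemma EK_bound: "i' \<le> 1 \<Longrightarrow> (\<Sum>k\<in>Kset i' n. ED k) \<le> CK * \<pi> ^ n"
proof -
  assume i': "i' \<le> 1"
  have "(\<Sum>k\<in>Kset i' n. ED k) = (\<Sum>m<n. EG (Suc m) i')" unfolding sum_Kset EG_def ..
  also have "\<dots> \<le> (\<Sum>m<n. \<pi> ^ Suc m / z 1)"
  proof (rule sum_mono)
    fix m
    have "EG (Suc m) i' \<le> \<pi> ^ Suc m * z i' / z 1" by (rule EG_bound[OF i'])
    also have "\<dots> \<le> \<pi> ^ Suc m * 1 / z 1"
    proof -
      have "i' = 0 \<or> i' = 1" using i' by auto
      then have "z i' \<le> 1" using z_pos by (elim disjE) auto
      then show ?thesis using z_pos pi_gt1 by (intro divide_right_mono mult_left_mono) auto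
    qed
    finally show "EG (Suc m) i' \<le> \<pi> ^ Suc m / z 1" by simp
  qed
  also have "\<dots> = (\<Sum>m<n. \<pi> ^ Suc m) / z 1" by (simp add: sum_divide_distrib)
  also have "\<dots> \<le> \<pi> ^ Suc n / (\<pi> - 1) / z 1"
    using geo_bound z_pos by (intro divide_right_mono) auto
  also have "\<dots> = CK * \<pi> ^ n" unfolding CK_def by (simp add: field_simps)
  finally show ?thesis .
qed

end

lemma L2sum:
  fixes U :: "nat \<Rightarrow> 'a \<Rightarrow> real"
  assumes K: "finite K" and iU: "\<And>k l. k \<in> K \<Longrightarrow> l \<in> K \<Longrightarrow> integrable M (\<lambda>\<omega>. U k \<omega> * U l \<omega>)"
    and orth: "\<And>k l. k \<in> K \<Longrightarrow> l \<in> K \<Longrightarrow> k \<noteq> l \<Longrightarrow> (\<integral>\<omega>. U k \<omega> * U l \<omega> \<partial>M) = 0"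
  shows "(\<integral>\<omega>. (\<Sum>k\<in>K. U k \<omega>)\<^sup>2 \<partial>M) = (\<Sum>k\<in>K. \<integral>\<omega>. (U k \<omega>)\<^sup>2 \<partial>M)"
    "integrable M (\<lambda>\<omega>. (\<Sum>k\<in>K. U k \<omega>)\<^sup>2)"
proof -
  have sq: "(\<Sum>k\<in>K. U k \<omega>)\<^sup>2 = (\<Sum>k\<in>K. \<Sum>l\<in>K. U k \<omega> * U l \<omega>)" for \<omega>
    by (simp add: power2_eq_square sum_product)
  show "integrable M (\<lambda>\<omega>. (\<Sum>k\<in>K. U k \<omega>)\<^sup>2)"
    unfolding sq by (intro Bochner_Integration.integrable_sum iU)
  have "(\<integral>\<omega>. (\<Sum>k\<in>K. U k \<omega>)\<^sup>2 \<partial>M) = (\<Sum>k\<in>K. \<Sum>l\<in>K. \<integral>\<omega>. U k \<omega> * U l \<omega> \<partial>M)"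
    unfolding sq
    by (subst Bochner_Integration.integral_sum) (auto intro!: Bochner_Integration.integrable_sum iU
        sum.cong Bochner_Integration.integral_sum)
  also have "\<dots> = (\<Sum>k\<in>K. \<Sum>l\<in>K. if l = k then \<integral>\<omega>. (U k \<omega>)\<^sup>2 \<partial>M else 0)"
    by (intro sum.cong refl) (auto simp: orth power2_eq_square)
  also have "\<dots> = (\<Sum>k\<in>K. \<integral>\<omega>. (U k \<omega>)\<^sup>2 \<partial>M)"
    using K by (simp add: sum.delta)
  finally show "(\<integral>\<omega>. (\<Sum>k\<in>K. U k \<omega>)\<^sup>2 \<partial>M) = (\<Sum>k\<in>K. \<integral>\<omega>. (U k \<omega>)\<^sup>2 \<partial>M)" .
qed

lemma L2_conv:
  fixes Y :: "nat \<Rightarrow> 'a \<Rightarrow> real"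
  assumes [measurable]: "\<And>n. Y n \<in> borel_measurable M"
    and iY: "\<And>n. integrable M (\<lambda>\<omega>. (Y n \<omega>)\<^sup>2)"
    and bnd: "\<And>n. (\<integral>\<omega>. (Y n \<omega>)\<^sup>2 \<partial>M) \<le> C * q ^ n"
    and q: "q > 1"
  shows "AE \<omega> in M. (\<lambda>n. Y n \<omega> / q ^ n) \<longlonglongrightarrow> 0"
proof -
  define g where "g n \<omega> = (Y n \<omega> / q ^ n)\<^sup>2" for n \<omega>
  have [measurable]: "g n \<in> borel_measurable M" for n unfolding g_def by measurable
  have gn: "0 \<le> g n \<omega>" for n \<omega> unfolding g_def by simp
  have ig: "(\<integral>\<^sup>+\<omega>. ennreal (g n \<omega>) \<partial>M) \<le> ennreal (\<bar>C\<bar> * (1 / q) ^ n)" for n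
  proof -
    have "integrable M (g n)" unfolding g_def using iY[of n]
      by (simp add: power_divide)
    then have "(\<integral>\<^sup>+\<omega>. ennreal (g n \<omega>) \<partial>M) = ennreal (\<integral>\<omega>. g n \<omega> \<partial>M)"
      by (intro nn_integral_eq_integral) (auto simp: gn)
    also have "(\<integral>\<omega>. g n \<omega> \<partial>M) = (\<integral>\<omega>. (Y n \<omega>)\<^sup>2 \<partial>M) / (q ^ n)\<^sup>2"
      unfolding g_def by (simp add: power_divide)
    also have "\<dots> \<le> C * q ^ n / (q ^ n)\<^sup>2" using q by (intro divide_right_mono bnd) auto
    also have "\<dots> = C * (1 / q) ^ n" using q by (simp add: power2_eq_square power_one_over field_simps)
    also have "\<dots> \<le> \<bar>C\<bar> * (1 / q) ^ n" using q by (intro mult_right_mono) auto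
    finally show ?thesis by (simp add: ennreal_leI)
  qed
  have sg: "summable (\<lambda>n. \<bar>C\<bar> * (1 / q) ^ n)" using q by (intro summable_mult summable_geometric) auto
  have "(\<integral>\<^sup>+\<omega>. (\<Sum>n. ennreal (g n \<omega>)) \<partial>M) = (\<Sum>n. \<integral>\<^sup>+\<omega>. ennreal (g n \<omega>) \<partial>M)"
    by (rule nn_integral_suminf) measurable
  also have "\<dots> \<le> (\<Sum>n. ennreal (\<bar>C\<bar> * (1 / q) ^ n))"
    by (intro suminf_le ig) auto
  also have "(\<Sum>n. ennreal (\<bar>C\<bar> * (1 / q) ^ n)) \<noteq> top"
    by (rule ennreal_suminf_neq_top[OF sg]) (use q in simp)
  then have "(\<Sum>n. ennreal (\<bar>C\<bar> * (1 / q) ^ n)) < \<infinity>" by (simp add: less_top)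
  finally have "(\<integral>\<^sup>+\<omega>. (\<Sum>n. ennreal (g n \<omega>)) \<partial>M) \<noteq> \<infinity>" by simp
  then have "AE \<omega> in M. (\<Sum>n. ennreal (g n \<omega>)) \<noteq> \<infinity>"
    by (intro nn_integral_noteq_infinite) measurable
  then show ?thesis
  proof eventually_elim
    fix \<omega> assume "(\<Sum>n. ennreal (g n \<omega>)) \<noteq> \<infinity>"
    then have "summable (\<lambda>n. g n \<omega>)" by (intro summable_suminf_not_top gn) simp
    then have "(\<lambda>n. g n \<omega>) \<longlonglongrightarrow> 0" by (rule summable_LIMSEQ_zero)
    then have "(\<lambda>n. sqrt (g n \<omega>)) \<longlonglongrightarrow> sqrt 0" by (intro tendsto_intros)
    moreover have "sqrt (g n \<omega>) = \<bar>Y n \<omega> / q ^ n\<bar>" for n unfolding g_def by (rule real_sqrt_abs)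
    ultimately have "(\<lambda>n. \<bar>Y n \<omega> / q ^ n\<bar>) \<longlonglongrightarrow> 0" by simp
    then show "(\<lambda>n. Y n \<omega> / q ^ n) \<longlonglongrightarrow> 0" by (rule tendsto_rabs_zero_cancel)
  qed
qed

lemma rec_conv:
  fixes w e :: "nat \<Rightarrow> real" and r :: real
  assumes r: "0 \<le> r" "r < 1" and rec: "\<And>n. \<bar>w (Suc n)\<bar> \<le> r * \<bar>w n\<bar> + \<bar>e n\<bar>"
    and e: "e \<longlonglongrightarrow> 0"
  shows "w \<longlonglongrightarrow> 0"
proof (rule LIMSEQ_I)
  fix \<epsilon> :: real assume \<epsilon>: "0 < \<epsilon>"
  have "0 < \<epsilon> * (1 - r) / 2" using \<epsilon> r by simp
  from LIMSEQ_D[OF e this] obtain N where N0: "\<forall>n\<ge>N. norm (e n - 0) < \<epsilon> * (1 - r) / 2" by blast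
  have N: "\<And>n. n \<ge> N \<Longrightarrow> norm (e n) < \<epsilon> * (1 - r) / 2" using N0 by simp
  have bound: "\<bar>w (N + k)\<bar> \<le> r ^ k * \<bar>w N\<bar> + \<epsilon> / 2" for k
  proof (induction k)
    case 0 then show ?case using \<epsilon> by simp
  next
    case (Suc k)
    have "\<bar>w (N + Suc k)\<bar> \<le> r * \<bar>w (N + k)\<bar> + \<bar>e (N + k)\<bar>" using rec[of "N + k"] by simp
    also have "\<dots> \<le> r * (r ^ k * \<bar>w N\<bar> + \<epsilon> / 2) + \<epsilon> * (1 - r) / 2"
      using Suc N[of "N + k"] r by (intro add_mono mult_left_mono) auto
    also have "\<dots> = r ^ Suc k * \<bar>w N\<bar> + \<epsilon> / 2" by (simp add: field_simps)
    finally show ?case .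
  qed
  have "(\<lambda>k. r ^ k * \<bar>w N\<bar>) \<longlonglongrightarrow> 0 * \<bar>w N\<bar>" using r by (intro tendsto_intros LIMSEQ_power_zero) auto
  then have "(\<lambda>k. r ^ k * \<bar>w N\<bar>) \<longlonglongrightarrow> 0" by simp
  moreover have "0 < \<epsilon> / 2" using \<epsilon> by simp
  ultimately obtain K where K0: "\<forall>k\<ge>K. norm (r ^ k * \<bar>w N\<bar> - 0) < \<epsilon> / 2"
    using LIMSEQ_D by blast
  have K: "\<And>k. k \<ge> K \<Longrightarrow> norm (r ^ k * \<bar>w N\<bar>) < \<epsilon> / 2" using K0 by simp
  show "\<exists>n0. \<forall>n\<ge>n0. norm (w n - 0) < \<epsilon>"
  proof (intro exI allI impI)
    fix n assume n: "N + K \<le> n"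
    define k where "k = n - N"
    have k: "n = N + k" "K \<le> k" using n unfolding k_def by arith+
    have "\<bar>w n\<bar> \<le> r ^ k * \<bar>w N\<bar> + \<epsilon> / 2" using bound k by simp
    also have "\<dots> < \<epsilon> / 2 + \<epsilon> / 2" using K[OF k(2)] r by simp
    finally show "norm (w n - 0) < \<epsilon>" by simp
  qed
qed

lemma toeplitz:
  fixes a :: "nat \<Rightarrow> real"
  assumes q: "q > 1" and c: "(\<lambda>m. a m / q ^ m) \<longlonglongrightarrow> L"
  shows "(\<lambda>n. (\<Sum>m<n. a (Suc m)) / q ^ n) \<longlonglongrightarrow> L * (q / (q - 1))"
proof -
  define u where "u n = (\<Sum>m<n. a (Suc m)) / q ^ n" for n
  define Ls where "Ls = L * (q / (q - 1))"
  define w where "w n = u n - Ls" for n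
  define e where "e n = a (Suc n) / q ^ Suc n - L" for n
  have e: "e \<longlonglongrightarrow> 0"
  proof -
    have "(\<lambda>n. a (Suc n) / q ^ Suc n) \<longlonglongrightarrow> L" using LIMSEQ_Suc[OF c] .
    then have "(\<lambda>n. a (Suc n) / q ^ Suc n - L) \<longlonglongrightarrow> L - L" by (intro tendsto_intros)
    moreover have "e = (\<lambda>n. a (Suc n) / q ^ Suc n - L)" by (simp add: e_def fun_eq_iff)
    ultimately show ?thesis by simp
  qed
  have wrec: "w (Suc n) = (1 / q) * w n + e n" for n
  proof -
    have "u (Suc n) = u n / q + a (Suc n) / q ^ Suc n"
      unfolding u_def using q by (simp add: field_simps)
    moreover have "Ls = Ls / q + L" unfolding Ls_def using q by (simp add: field_simps)
    ultimately have "w (Suc n) = u n / q + a (Suc n) / q ^ Suc n - (Ls / q + L)"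
      unfolding w_def by simp
    also have "\<dots> = (1 / q) * w n + e n" unfolding w_def e_def by (simp add: diff_divide_distrib)
    finally show ?thesis .
  qed
  have "w \<longlonglongrightarrow> 0"
  proof (rule rec_conv[where r="1 / q" and e=e])
    show "0 \<le> 1 / q" "1 / q < 1" using q by auto
    fix n show "\<bar>w (Suc n)\<bar> \<le> 1 / q * \<bar>w n\<bar> + \<bar>e n\<bar>"
      unfolding wrec using abs_triangle_ineq[of "w n / q" "e n"] q by (simp add: abs_divide)
  qed (rule e)
  then have "(\<lambda>n. w n + Ls) \<longlonglongrightarrow> 0 + Ls" by (intro tendsto_intros)
  then show ?thesis unfolding w_def u_def Ls_def by simp
qed

lemma in_some_Gen: "1 \<le> k \<Longrightarrow> \<exists>m. k \<in> Gen m"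
proof -
  assume k: "1 \<le> k"
  have "k < 2 ^ k" by (rule less_exp)
  then have "k < 2 ^ Suc k" unfolding power_Suc by linarith
  then have "k \<in> Tr k" using k by (simp add: Tr_eq)
  then show ?thesis unfolding Tr_def by blast
qed

lemma in_some_Gen_Suc: "2 \<le> k \<Longrightarrow> \<exists>m. k \<in> Gen (Suc m)"
proof -
  assume k: "2 \<le> k"
  then obtain m where m: "k \<in> Gen m" using in_some_Gen[of k] by auto
  have "m \<noteq> 0"
  proof
    assume "m = 0" then show False using m k by (simp add: Gen_def)
  qed
  then show ?thesis using m by (cases m) auto
qed

lemma ab2: "\<bar>x * y :: real\<bar> \<le> (x\<^sup>2 + y\<^sup>2) / 2"
proof -
  have "0 \<le> (\<bar>x\<bar> - \<bar>y\<bar>)\<^sup>2" by simp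
  then have "2 * (\<bar>x\<bar> * \<bar>y\<bar>) \<le> \<bar>x\<bar>\<^sup>2 + \<bar>y\<bar>\<^sup>2" by (simp add: power2_eq_square algebra_simps)
  then show ?thesis by (simp add: abs_mult)
qed

lemma abs4: "\<bar>a * b * c * d :: real\<bar> \<le> a ^ 4 + b ^ 4 + c ^ 4 + d ^ 4"
proof -
  have "\<bar>a * b * c * d\<bar> = \<bar>a * b\<bar> * \<bar>c * d\<bar>" by (simp add: abs_mult)
  also have "\<dots> \<le> ((a\<^sup>2 + b\<^sup>2) / 2) * ((c\<^sup>2 + d\<^sup>2) / 2)" using ab2[of a b] ab2[of c d] by (intro mult_mono) auto
  also have "\<dots> = \<bar>(a\<^sup>2 + b\<^sup>2) * (c\<^sup>2 + d\<^sup>2)\<bar> / 4" by simp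
  also have "\<dots> \<le> (((a\<^sup>2 + b\<^sup>2))\<^sup>2 + (c\<^sup>2 + d\<^sup>2)\<^sup>2) / 2 / 4" using ab2[of "a\<^sup>2 + b\<^sup>2" "c\<^sup>2 + d\<^sup>2"] by simp
  also have "(a\<^sup>2 + b\<^sup>2)\<^sup>2 \<le> 2 * (a ^ 4 + b ^ 4)" using ab2[of "a\<^sup>2" "b\<^sup>2"]
    by (simp add: power2_sum power_mult[symmetric] abs_mult)
  also have "(c\<^sup>2 + d\<^sup>2)\<^sup>2 \<le> 2 * (c ^ 4 + d ^ 4)" using ab2[of "c\<^sup>2" "d\<^sup>2"]
    by (simp add: power2_sum power_mult[symmetric] abs_mult)
  finally show ?thesis by (simp add: divide_right_mono)
qed


context BLoc begin

lemma Gen_Suc_ge2: "k \<in> Gen (Suc n) \<Longrightarrow> 2 \<le> k"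
proof -
  assume k: "k \<in> Gen (Suc n)"
  have a: "2 ^ Suc n \<le> k" using k unfolding Gen_def atLeastLessThan_iff by (rule conjunct1)
  have b: "2 \<le> (2::nat) ^ Suc n" using power_increasing[of 1 "Suc n" "2::nat"] by simp
  from a b show ?thesis by linarith
qed

lemma eps8: "2 \<le> k \<Longrightarrow> integrable M (\<lambda>\<omega>. \<epsilon> k \<omega> ^ 8)"
  using in_some_Gen_Suc[of k] eps_L8 by blast

lemma eps_pow_int: assumes k: "2 \<le> k" and j: "j \<le> 8" shows "integrable M (\<lambda>\<omega>. \<epsilon> k \<omega> ^ j)"
proof (rule Bochner_Integration.integrable_bound)
  show "integrable M (\<lambda>\<omega>. 1 + \<epsilon> k \<omega> ^ 8)" using eps8[OF k] by simp
  show "(\<lambda>\<omega>. \<epsilon> k \<omega> ^ j) \<in> borel_measurable M" using eps_meas by measurable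
  have "\<bar>x ^ j\<bar> \<le> \<bar>1 + x ^ 8\<bar>" for x :: real
  proof (cases "\<bar>x\<bar> \<le> 1")
    case True
    then have h1: "\<bar>x ^ j\<bar> \<le> 1" by (simp add: power_le_one power_abs)
    have "0 \<le> x ^ 8" by (simp add: zero_le_even_power)
    then have "1 \<le> \<bar>1 + x ^ 8\<bar>" by simp
    with h1 show ?thesis by linarith
  next
    case False
    then have "\<bar>x\<bar> ^ j \<le> \<bar>x\<bar> ^ 8" using j by (intro power_increasing) auto
    moreover have "\<bar>x\<bar> ^ 8 = x ^ 8" by (simp add: power_even_abs)
    ultimately show ?thesis by (simp add: power_abs)
  qed
  then show "AE \<omega> in M. norm (\<epsilon> k \<omega> ^ j) \<le> norm (1 + \<epsilon> k \<omega> ^ 8)" by simp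
qed

lemma eps_prod4:
  assumes "2 \<le> a1" "2 \<le> a2" "2 \<le> a3" "2 \<le> a4"
  shows "integrable M (\<lambda>\<omega>. \<epsilon> a1 \<omega> * \<epsilon> a2 \<omega> * \<epsilon> a3 \<omega> * \<epsilon> a4 \<omega>)"
proof (rule Bochner_Integration.integrable_bound)
  show "integrable M (\<lambda>\<omega>. \<epsilon> a1 \<omega> ^ 4 + \<epsilon> a2 \<omega> ^ 4 + \<epsilon> a3 \<omega> ^ 4 + \<epsilon> a4 \<omega> ^ 4)"
    using assms by (intro Bochner_Integration.integrable_add eps_pow_int) auto
  show "(\<lambda>\<omega>. \<epsilon> a1 \<omega> * \<epsilon> a2 \<omega> * \<epsilon> a3 \<omega> * \<epsilon> a4 \<omega>) \<in> borel_measurable M" using eps_meas by measurable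
  have "0 \<le> x ^ 4" for x :: real by (simp add: zero_le_even_power)
  then show "AE \<omega> in M. norm (\<epsilon> a1 \<omega> * \<epsilon> a2 \<omega> * \<epsilon> a3 \<omega> * \<epsilon> a4 \<omega>)
      \<le> norm (\<epsilon> a1 \<omega> ^ 4 + \<epsilon> a2 \<omega> ^ 4 + \<epsilon> a3 \<omega> ^ 4 + \<epsilon> a4 \<omega> ^ 4)"
    using abs4 by (auto intro: order.trans[OF abs4] abs_ge_self)
qed

lemma eps_prod2:
  assumes "2 \<le> a1" "2 \<le> a2"
  shows "integrable M (\<lambda>\<omega>. \<epsilon> a1 \<omega> * \<epsilon> a2 \<omega>)"
proof (rule Bochner_Integration.integrable_bound)
  show "integrable M (\<lambda>\<omega>. \<epsilon> a1 \<omega> ^ 2 + \<epsilon> a2 \<omega> ^ 2)"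
    using assms by (intro Bochner_Integration.integrable_add eps_pow_int) auto
  show "(\<lambda>\<omega>. \<epsilon> a1 \<omega> * \<epsilon> a2 \<omega>) \<in> borel_measurable M" using eps_meas by measurable
  show "AE \<omega> in M. norm (\<epsilon> a1 \<omega> * \<epsilon> a2 \<omega>) \<le> norm (\<epsilon> a1 \<omega> ^ 2 + \<epsilon> a2 \<omega> ^ 2)"
  proof
    fix \<omega>
    have "\<bar>\<epsilon> a1 \<omega> * \<epsilon> a2 \<omega>\<bar> \<le> ((\<epsilon> a1 \<omega>)\<^sup>2 + (\<epsilon> a2 \<omega>)\<^sup>2) / 2" by (rule ab2)
    also have "\<dots> \<le> \<bar>(\<epsilon> a1 \<omega>)\<^sup>2 + (\<epsilon> a2 \<omega>)\<^sup>2\<bar>" by simp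
    finally show "norm (\<epsilon> a1 \<omega> * \<epsilon> a2 \<omega>) \<le> norm (\<epsilon> a1 \<omega> ^ 2 + \<epsilon> a2 \<omega> ^ 2)" by simp
  qed
qed

lemma cross0:
  assumes phi: "\<phi> \<in> borel_measurable (natF M X n)" and g[measurable]: "g \<in> borel_measurable M"
    and ig: "integrable M (\<lambda>\<omega>. \<phi> \<omega> * g \<omega>)"
    and c: "AE \<omega> in M. real_cond_exp M (natF M X n) g \<omega> = 0"
  shows "(\<integral>\<omega>. \<phi> \<omega> * g \<omega> \<partial>M) = 0"
proof -
  interpret sf: sigma_finite_subalgebra M "natF M X n" by (rule natF_sf)
  have "(\<integral>\<omega>. \<phi> \<omega> * g \<omega> \<partial>M) = (\<integral>\<omega>. \<phi> \<omega> * real_cond_exp M (natF M X n) g \<omega> \<partial>M)"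
    by (rule sf.real_cond_exp_intg(2)[symmetric, OF ig phi g])
  also have "\<dots> = (\<integral>\<omega>. 0 \<partial>M)"
    by (rule integral_cong_AE) (use c measurable_from_subalg[OF natF_subalg phi] in auto)
  finally show ?thesis by simp
qed

lemma cE_const: "AE \<omega> in M. real_cond_exp M (natF M X n) (\<lambda>_. r) \<omega> = r"
proof -
  interpret sf: sigma_finite_subalgebra M "natF M X n" by (rule natF_sf)
  show ?thesis by (rule sf.real_cond_exp_F_meas) auto
qed

lemma cE_eps2: assumes k: "k \<in> Gen (Suc n)"
  shows "AE \<omega> in M. real_cond_exp M (natF M X n) (\<lambda>\<omega>. \<epsilon> k \<omega> ^ 2 - \<sigma>2) \<omega> = 0"
proof -
  interpret sf: sigma_finite_subalgebra M "natF M X n" by (rule natF_sf)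
  have k2: "2 \<le> k" using k by (rule Gen_Suc_ge2)
  have "AE \<omega> in M. real_cond_exp M (natF M X n) (\<lambda>\<omega>. \<epsilon> k \<omega> ^ 2 - \<sigma>2) \<omega>
      = real_cond_exp M (natF M X n) (\<lambda>\<omega>. \<epsilon> k \<omega> ^ 2) \<omega> - real_cond_exp M (natF M X n) (\<lambda>_. \<sigma>2) \<omega>"
    by (rule sf.real_cond_exp_diff) (auto intro: eps_pow_int[OF k2])
  then show ?thesis using ce2[OF k] cE_const[where n=n and r=\<sigma>2] by eventually_elim simp
qed

lemma cE_pair: assumes k: "k \<in> Gen n"
  shows "AE \<omega> in M. real_cond_exp M (natF M X n) (\<lambda>\<omega>. \<epsilon> (2*k) \<omega> * \<epsilon> (2*k+1) \<omega> - \<rho>) \<omega> = 0"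
proof -
  interpret sf: sigma_finite_subalgebra M "natF M X n" by (rule natF_sf)
  have k2: "2 \<le> 2 * k" "2 \<le> 2 * k + 1" using Gen_ge1[OF k] by auto
  have "AE \<omega> in M. real_cond_exp M (natF M X n) (\<lambda>\<omega>. \<epsilon> (2*k) \<omega> * \<epsilon> (2*k+1) \<omega> - \<rho>) \<omega>
      = real_cond_exp M (natF M X n) (\<lambda>\<omega>. \<epsilon> (2*k) \<omega> * \<epsilon> (2*k+1) \<omega>) \<omega> - real_cond_exp M (natF M X n) (\<lambda>_. \<rho>) \<omega>"
    by (rule sf.real_cond_exp_diff[OF eps_prod2[OF k2]]) simp
  then show ?thesis using cc1[OF k] cE_const[where n=n and r=\<rho>] by eventually_elim simp
qed

end

context BLoc begin

lemma int_sq_prod: assumes "2 \<le> k" "2 \<le> l"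
  shows "integrable M (\<lambda>\<omega>. (\<epsilon> k \<omega> ^ 2 - \<sigma>2) * (\<epsilon> l \<omega> ^ 2 - \<sigma>2))"
proof -
  have "integrable M (\<lambda>\<omega>. \<epsilon> k \<omega> * \<epsilon> k \<omega> * \<epsilon> l \<omega> * \<epsilon> l \<omega> - \<sigma>2 * \<epsilon> k \<omega> ^ 2 - \<sigma>2 * \<epsilon> l \<omega> ^ 2 + \<sigma>2 * \<sigma>2)"
    using assms by (intro Bochner_Integration.integrable_add Bochner_Integration.integrable_diff
        eps_prod4 Bochner_Integration.integrable_mult_right eps_pow_int) auto
  then show ?thesis by (rule Bochner_Integration.integrable_cong[THEN iffD1, rotated 2])
    (auto simp: algebra_simps power2_eq_square)
qed

lemma int_pair_prod: assumes "2 \<le> a1" "2 \<le> a2" "2 \<le> a3" "2 \<le> a4"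
  shows "integrable M (\<lambda>\<omega>. (\<epsilon> a1 \<omega> * \<epsilon> a2 \<omega> - \<rho>) * (\<epsilon> a3 \<omega> * \<epsilon> a4 \<omega> - \<rho>))"
proof -
  have "integrable M (\<lambda>\<omega>. \<epsilon> a1 \<omega> * \<epsilon> a2 \<omega> * \<epsilon> a3 \<omega> * \<epsilon> a4 \<omega> - \<rho> * (\<epsilon> a1 \<omega> * \<epsilon> a2 \<omega>) - \<rho> * (\<epsilon> a3 \<omega> * \<epsilon> a4 \<omega>) + \<rho> * \<rho>)"
    using assms by (intro Bochner_Integration.integrable_add Bochner_Integration.integrable_diff
        eps_prod4 Bochner_Integration.integrable_mult_right eps_prod2) auto
  then show ?thesis by (rule Bochner_Integration.integrable_cong[THEN iffD1, rotated 2])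
    (auto simp: algebra_simps)
qed

lemma cind2:
  assumes uv: "u \<in> Gen n" "v \<in> Gen n" "u \<noteq> v" and A: "A \<in> sets borel" and B: "B \<in> sets borel"
  shows "AE \<omega> in M. real_cond_exp M (natF M X n)
      (\<lambda>\<omega>. indicator A (\<epsilon> (2 * u) \<omega>, \<epsilon> (2 * u+1) \<omega>) * indicator B (\<epsilon> (2 * v) \<omega>, \<epsilon> (2 * v+1) \<omega>)) \<omega>
    = real_cond_exp M (natF M X n) (\<lambda>\<omega>. indicator A (\<epsilon> (2 * u) \<omega>, \<epsilon> (2 * u+1) \<omega>)) \<omega> *
      real_cond_exp M (natF M X n) (\<lambda>\<omega>. indicator B (\<epsilon> (2 * v) \<omega>, \<epsilon> (2 * v+1) \<omega>)) \<omega>"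
proof -
  define BB where "BB w = (if w = u then A else B)" for w
  have "AE \<omega> in M. real_cond_exp M (natF M X n)
          (\<lambda>\<omega>. \<Prod>k\<in>{u,v}. indicator (BB k) (\<epsilon> (2*k) \<omega>, \<epsilon> (2*k+1) \<omega>)) \<omega>
        = (\<Prod>k\<in>{u,v}. real_cond_exp M (natF M X n)
             (\<lambda>\<omega>. indicator (BB k) (\<epsilon> (2*k) \<omega>, \<epsilon> (2*k+1) \<omega>)) \<omega>)"
    by (rule cind) (use uv A B in \<open>auto simp: BB_def\<close>)
  then show ?thesis using uv(3) by (simp add: BB_def)
qed

lemma E_cE: assumes "integrable M f" "AE \<omega> in M. real_cond_exp M (natF M X n) f \<omega> = r"
  shows "(\<integral>\<omega>. f \<omega> \<partial>M) = r"
proof -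
  interpret sf: sigma_finite_subalgebra M "natF M X n" by (rule natF_sf)
  have "(\<integral>\<omega>. f \<omega> \<partial>M) = (\<integral>\<omega>. real_cond_exp M (natF M X n) f \<omega> \<partial>M)"
    by (rule sf.real_cond_exp_int(2)[symmetric, OF assms(1)])
  also have "\<dots> = (\<integral>\<omega>. r \<partial>M)" by (rule integral_cong_AE) (use assms(2) in auto)
  finally show ?thesis by (simp add: ps.prob_space)
qed

lemma orth1_aux:
  assumes k: "k \<in> Gen (Suc m) \<inter> Ty i" and l: "l \<in> Gen (Suc m') \<inter> Ty i" and mm: "m' \<le> m" and kl: "k \<noteq> l"
  shows "(\<integral>\<omega>. (\<epsilon> k \<omega> ^ 2 - \<sigma>2) * (\<epsilon> l \<omega> ^ 2 - \<sigma>2) \<partial>M) = 0"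
proof -
  have k2: "2 \<le> k" and l2: "2 \<le> l" using k l Gen_Suc_ge2 by auto
  show ?thesis
  proof (cases "m' < m")
    case True
    have lT: "l \<in> Tr m" using l True Gen_sub_Tr[of "Suc m'" m] by auto
    have "(\<integral>\<omega>. (\<epsilon> l \<omega> ^ 2 - \<sigma>2) * (\<epsilon> k \<omega> ^ 2 - \<sigma>2) \<partial>M) = 0"
    proof (rule cross0)
      show "(\<lambda>\<omega>. \<epsilon> l \<omega> ^ 2 - \<sigma>2) \<in> borel_measurable (natF M X m)"
        using eps_natF[OF lT l2] by measurable
      show "(\<lambda>\<omega>. \<epsilon> k \<omega> ^ 2 - \<sigma>2) \<in> borel_measurable M" using eps_meas by measurable
      show "integrable M (\<lambda>\<omega>. (\<epsilon> l \<omega> ^ 2 - \<sigma>2) * (\<epsilon> k \<omega> ^ 2 - \<sigma>2))" by (rule int_sq_prod[OF l2 k2])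
      show "AE \<omega> in M. real_cond_exp M (natF M X m) (\<lambda>\<omega>. \<epsilon> k \<omega> ^ 2 - \<sigma>2) \<omega> = 0"
        using k by (intro cE_eps2) auto
    qed
    then show ?thesis by (simp add: mult.commute)
  next
    case False
    then have mm': "m' = m" using mm by auto
    define u where "u = k div 2"
    define v where "v = l div 2"
    have u: "u \<in> Gen m" and v: "v \<in> Gen m" using k l mm' Gen_half unfolding u_def v_def by auto
    have "k mod 2 = i" "l mod 2 = i" using k l unfolding Ty_def by auto
    then have ku: "k = 2 * u + i" and lv: "l = 2 * v + i" unfolding u_def v_def by presburger+
    have uv: "u \<noteq> v" using kl ku lv by auto
    define f where "f xy = (if i = 0 then fst xy else snd xy) ^ 2 - \<sigma>2" for xy :: "real \<times> real"
    have i01': "i = 0 \<or> i = 1" using i01 by auto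
    have fk: "f (\<epsilon> (2 * u) \<omega>, \<epsilon> (2 * u+1) \<omega>) = \<epsilon> k \<omega> ^ 2 - \<sigma>2" for \<omega>
      using i01' unfolding f_def ku by auto
    have fl: "f (\<epsilon> (2 * v) \<omega>, \<epsilon> (2 * v+1) \<omega>) = \<epsilon> l \<omega> ^ 2 - \<sigma>2" for \<omega>
      using i01' unfolding f_def lv by auto
    have "(\<integral>\<omega>. f (\<epsilon> (2 * u) \<omega>, \<epsilon> (2 * u+1) \<omega>) * f (\<epsilon> (2 * v) \<omega>, \<epsilon> (2 * v+1) \<omega>) \<partial>M) = 0"
    proof (rule ci_orth[OF prob natF_sf])
      show "(\<lambda>\<omega>. (\<epsilon> (2 * u) \<omega>, \<epsilon> (2 * u+1) \<omega>)) \<in> borel_measurable M" "(\<lambda>\<omega>. (\<epsilon> (2 * v) \<omega>, \<epsilon> (2 * v+1) \<omega>)) \<in> borel_measurable M"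
        using eps_meas by measurable
      have "continuous_on UNIV f" unfolding f_def by (cases "i = 0") (auto intro!: continuous_intros)
      then show "f \<in> borel_measurable borel" by (rule borel_measurable_continuous_onI)
      then show "f \<in> borel_measurable borel" .
      fix A B :: "(real \<times> real) set" assume "A \<in> sets borel" "B \<in> sets borel"
      then show "AE \<omega> in M. real_cond_exp M (natF M X m)
          (\<lambda>\<omega>. indicator A (\<epsilon> (2 * u) \<omega>, \<epsilon> (2 * u+1) \<omega>) * indicator B (\<epsilon> (2 * v) \<omega>, \<epsilon> (2 * v+1) \<omega>)) \<omega>
        = real_cond_exp M (natF M X m) (\<lambda>\<omega>. indicator A (\<epsilon> (2 * u) \<omega>, \<epsilon> (2 * u+1) \<omega>)) \<omega> *
          real_cond_exp M (natF M X m) (\<lambda>\<omega>. indicator B (\<epsilon> (2 * v) \<omega>, \<epsilon> (2 * v+1) \<omega>)) \<omega>"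
        by (rule cind2[OF u v uv])
    next
      show "integrable M (\<lambda>\<omega>. f (\<epsilon> (2 * u) \<omega>, \<epsilon> (2 * u+1) \<omega>))"
        unfolding fk using k2 by (intro Bochner_Integration.integrable_diff eps_pow_int) auto
      show "AE \<omega> in M. real_cond_exp M (natF M X m) (\<lambda>\<omega>. f (\<epsilon> (2 * u) \<omega>, \<epsilon> (2 * u+1) \<omega>)) \<omega> = 0"
        unfolding fk using k by (intro cE_eps2) auto
      show "integrable M (\<lambda>\<omega>. f (\<epsilon> (2 * u) \<omega>, \<epsilon> (2 * u+1) \<omega>) * f (\<epsilon> (2 * v) \<omega>, \<epsilon> (2 * v+1) \<omega>))"
        unfolding fk fl by (rule int_sq_prod[OF k2 l2])
    qed
    then show ?thesis unfolding fk fl .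
  qed
qed

lemma orth1:
  assumes "k \<in> Kset i n" "l \<in> Kset i n" "k \<noteq> l"
  shows "(\<integral>\<omega>. (\<epsilon> k \<omega> ^ 2 - \<sigma>2) * (\<epsilon> l \<omega> ^ 2 - \<sigma>2) \<partial>M) = 0"
proof -
  obtain m m' where m: "k \<in> Gen (Suc m)" and m': "l \<in> Gen (Suc m')" using Kset_Gen assms by blast
  have t: "k \<in> Ty i" "l \<in> Ty i" using assms Kset_Ty by auto
  show ?thesis
  proof (cases "m' \<le> m")
    case True then show ?thesis using orth1_aux m m' t assms(3) by auto
  next
    case False
    then have "(\<integral>\<omega>. (\<epsilon> l \<omega> ^ 2 - \<sigma>2) * (\<epsilon> k \<omega> ^ 2 - \<sigma>2) \<partial>M) = 0"
      using orth1_aux[of l m' k m] m m' t assms(3) by auto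
    then show ?thesis by (simp add: mult.commute)
  qed
qed

end

context BLoc begin

lemma orth3_aux:
  assumes k: "k \<in> Gen (Suc m)" and l: "l \<in> Gen (Suc m')" and mm: "m' \<le> m" and kl: "k \<noteq> l"
  shows "(\<integral>\<omega>. (\<epsilon> (2 * k) \<omega> * \<epsilon> (2 * k + 1) \<omega> - \<rho>) * (\<epsilon> (2 * l) \<omega> * \<epsilon> (2 * l + 1) \<omega> - \<rho>) \<partial>M) = 0"
proof -
  have k2: "2 \<le> 2 * k" "2 \<le> 2 * k + 1" and l2: "2 \<le> 2 * l" "2 \<le> 2 * l + 1"
    using k l Gen_ge1 by fastforce+
  show ?thesis
  proof (cases "m' < m")
    case True
    have lT: "2 * l \<in> Tr (Suc m)" "2 * l + 1 \<in> Tr (Suc m)"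
      using Gen_double[OF l] True Gen_sub_Tr[of "Suc (Suc m')" "Suc m"] by auto
    have "(\<integral>\<omega>. (\<epsilon> (2 * l) \<omega> * \<epsilon> (2 * l + 1) \<omega> - \<rho>) * (\<epsilon> (2 * k) \<omega> * \<epsilon> (2 * k + 1) \<omega> - \<rho>) \<partial>M) = 0"
    proof (rule cross0)
      show "(\<lambda>\<omega>. \<epsilon> (2 * l) \<omega> * \<epsilon> (2 * l + 1) \<omega> - \<rho>) \<in> borel_measurable (natF M X (Suc m))"
        using eps_natF[OF lT(1) l2(1)] eps_natF[OF lT(2) l2(2)] by measurable
      show "(\<lambda>\<omega>. \<epsilon> (2 * k) \<omega> * \<epsilon> (2 * k + 1) \<omega> - \<rho>) \<in> borel_measurable M" using eps_meas by measurable
      show "integrable M (\<lambda>\<omega>. (\<epsilon> (2 * l) \<omega> * \<epsilon> (2 * l + 1) \<omega> - \<rho>) * (\<epsilon> (2 * k) \<omega> * \<epsilon> (2 * k + 1) \<omega> - \<rho>))"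
        by (rule int_pair_prod) (use k2 l2 in auto)
      show "AE \<omega> in M. real_cond_exp M (natF M X (Suc m)) (\<lambda>\<omega>. \<epsilon> (2 * k) \<omega> * \<epsilon> (2 * k + 1) \<omega> - \<rho>) \<omega> = 0"
        by (rule cE_pair[OF k])
    qed
    then show ?thesis by (simp add: mult.commute)
  next
    case False
    then have mm': "m' = m" using mm by auto
    define f where "f xy = fst xy * snd xy - \<rho>" for xy :: "real \<times> real"
    have fk: "f (\<epsilon> (2 * k) \<omega>, \<epsilon> (2 * k + 1) \<omega>) = \<epsilon> (2 * k) \<omega> * \<epsilon> (2 * k + 1) \<omega> - \<rho>"
      and fl: "f (\<epsilon> (2 * l) \<omega>, \<epsilon> (2 * l + 1) \<omega>) = \<epsilon> (2 * l) \<omega> * \<epsilon> (2 * l + 1) \<omega> - \<rho>" for \<omega>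
      unfolding f_def by auto
    have l': "l \<in> Gen (Suc m)" using l mm' by simp
    have "(\<integral>\<omega>. f (\<epsilon> (2 * k) \<omega>, \<epsilon> (2 * k + 1) \<omega>) * f (\<epsilon> (2 * l) \<omega>, \<epsilon> (2 * l + 1) \<omega>) \<partial>M) = 0"
    proof (rule ci_orth[OF prob natF_sf])
      show "(\<lambda>\<omega>. (\<epsilon> (2 * k) \<omega>, \<epsilon> (2 * k + 1) \<omega>)) \<in> borel_measurable M" "(\<lambda>\<omega>. (\<epsilon> (2 * l) \<omega>, \<epsilon> (2 * l + 1) \<omega>)) \<in> borel_measurable M"
        using eps_meas by measurable
      have "continuous_on UNIV f" unfolding f_def by (auto intro!: continuous_intros)
      then show "f \<in> borel_measurable borel" by (rule borel_measurable_continuous_onI)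
      then show "f \<in> borel_measurable borel" .
      fix A B :: "(real \<times> real) set" assume "A \<in> sets borel" "B \<in> sets borel"
      then show "AE \<omega> in M. real_cond_exp M (natF M X (Suc m))
          (\<lambda>\<omega>. indicator A (\<epsilon> (2 * k) \<omega>, \<epsilon> (2 * k + 1) \<omega>) * indicator B (\<epsilon> (2 * l) \<omega>, \<epsilon> (2 * l + 1) \<omega>)) \<omega>
        = real_cond_exp M (natF M X (Suc m)) (\<lambda>\<omega>. indicator A (\<epsilon> (2 * k) \<omega>, \<epsilon> (2 * k + 1) \<omega>)) \<omega> *
          real_cond_exp M (natF M X (Suc m)) (\<lambda>\<omega>. indicator B (\<epsilon> (2 * l) \<omega>, \<epsilon> (2 * l + 1) \<omega>)) \<omega>"
        by (rule cind2[OF k l' kl])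
    next
      show "integrable M (\<lambda>\<omega>. f (\<epsilon> (2 * k) \<omega>, \<epsilon> (2 * k + 1) \<omega>))"
        unfolding fk by (intro Bochner_Integration.integrable_diff eps_prod2 k2) simp
      show "AE \<omega> in M. real_cond_exp M (natF M X (Suc m)) (\<lambda>\<omega>. f (\<epsilon> (2 * k) \<omega>, \<epsilon> (2 * k + 1) \<omega>)) \<omega> = 0"
        unfolding fk by (rule cE_pair[OF k])
      show "integrable M (\<lambda>\<omega>. f (\<epsilon> (2 * k) \<omega>, \<epsilon> (2 * k + 1) \<omega>) * f (\<epsilon> (2 * l) \<omega>, \<epsilon> (2 * l + 1) \<omega>))"
        unfolding fk fl by (rule int_pair_prod) (use k2 l2 in auto)
    qed
    then show ?thesis unfolding fk fl .
  qed
qed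

lemma orth3:
  assumes "k \<in> Kset i n" "l \<in> Kset i n" "k \<noteq> l"
  shows "(\<integral>\<omega>. (\<epsilon> (2 * k) \<omega> * \<epsilon> (2 * k + 1) \<omega> - \<rho>) * (\<epsilon> (2 * l) \<omega> * \<epsilon> (2 * l + 1) \<omega> - \<rho>) \<partial>M) = 0"
proof -
  obtain m m' where m: "k \<in> Gen (Suc m)" and m': "l \<in> Gen (Suc m')" using Kset_Gen assms by blast
  show ?thesis
  proof (cases "m' \<le> m")
    case True then show ?thesis using orth3_aux m m' assms(3) by auto
  next
    case False
    then have "(\<integral>\<omega>. (\<epsilon> (2 * l) \<omega> * \<epsilon> (2 * l + 1) \<omega> - \<rho>) * (\<epsilon> (2 * k) \<omega> * \<epsilon> (2 * k + 1) \<omega> - \<rho>) \<partial>M) = 0"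
      using orth3_aux[of l m' k m] m m' assms(3) by auto
    then show ?thesis by (simp add: mult.commute)
  qed
qed

lemma mom1: assumes k: "k \<in> Gen (Suc n)"
  shows "(\<integral>\<omega>. (\<epsilon> k \<omega> ^ 2 - \<sigma>2)\<^sup>2 \<partial>M) = \<tau>4 - \<sigma>2\<^sup>2"
proof -
  have k2: "2 \<le> k" by (rule Gen_Suc_ge2[OF k])
  have i4: "integrable M (\<lambda>\<omega>. \<epsilon> k \<omega> ^ 4)" and i2: "integrable M (\<lambda>\<omega>. \<epsilon> k \<omega> ^ 2)"
    using eps_pow_int[OF k2] by auto
  have e4: "(\<integral>\<omega>. \<epsilon> k \<omega> ^ 4 \<partial>M) = \<tau>4" by (rule E_cE[OF i4 ce4[OF k]])
  have e2: "(\<integral>\<omega>. \<epsilon> k \<omega> ^ 2 \<partial>M) = \<sigma>2" by (rule E_cE[OF i2 ce2[OF k]])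
  have "(\<integral>\<omega>. (\<epsilon> k \<omega> ^ 2 - \<sigma>2)\<^sup>2 \<partial>M) = (\<integral>\<omega>. \<epsilon> k \<omega> ^ 4 - 2 * \<sigma>2 * \<epsilon> k \<omega> ^ 2 + \<sigma>2\<^sup>2 \<partial>M)"
    by (rule Bochner_Integration.integral_cong) (auto simp: power2_eq_square algebra_simps numeral_eq_Suc)
  also have "\<dots> = (\<integral>\<omega>. \<epsilon> k \<omega> ^ 4 \<partial>M) - 2 * \<sigma>2 * (\<integral>\<omega>. \<epsilon> k \<omega> ^ 2 \<partial>M) + \<sigma>2\<^sup>2"
    using i4 i2 by (simp add: ps.prob_space)
  finally show ?thesis unfolding e4 e2 by (simp add: power2_eq_square)
qed

lemma mom3: assumes k: "k \<in> Gen n"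
  shows "(\<integral>\<omega>. (\<epsilon> (2 * k) \<omega> * \<epsilon> (2 * k + 1) \<omega> - \<rho>)\<^sup>2 \<partial>M) = \<nu>2 * \<tau>4 - \<rho>\<^sup>2"
proof -
  have k2: "2 \<le> 2 * k" "2 \<le> 2 * k + 1" using Gen_ge1[OF k] by auto
  have i4: "integrable M (\<lambda>\<omega>. \<epsilon> (2 * k) \<omega> ^ 2 * \<epsilon> (2 * k + 1) \<omega> ^ 2)"
    using eps_prod4[OF k2(1) k2(1) k2(2) k2(2)] by (simp add: power2_eq_square mult.assoc mult.left_commute)
  have i2: "integrable M (\<lambda>\<omega>. \<epsilon> (2 * k) \<omega> * \<epsilon> (2 * k + 1) \<omega>)" by (rule eps_prod2[OF k2])
  have e4: "(\<integral>\<omega>. \<epsilon> (2 * k) \<omega> ^ 2 * \<epsilon> (2 * k + 1) \<omega> ^ 2 \<partial>M) = \<nu>2 * \<tau>4" by (rule E_cE[OF i4 cc2[OF k]])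
  have e2: "(\<integral>\<omega>. \<epsilon> (2 * k) \<omega> * \<epsilon> (2 * k + 1) \<omega> \<partial>M) = \<rho>" by (rule E_cE[OF i2 cc1[OF k]])
  have "(\<integral>\<omega>. (\<epsilon> (2 * k) \<omega> * \<epsilon> (2 * k + 1) \<omega> - \<rho>)\<^sup>2 \<partial>M)
      = (\<integral>\<omega>. \<epsilon> (2 * k) \<omega> ^ 2 * \<epsilon> (2 * k + 1) \<omega> ^ 2 - 2 * \<rho> * (\<epsilon> (2 * k) \<omega> * \<epsilon> (2 * k + 1) \<omega>) + \<rho>\<^sup>2 \<partial>M)"
    by (rule Bochner_Integration.integral_cong) (auto simp: power2_eq_square algebra_simps)
  also have "\<dots> = (\<integral>\<omega>. \<epsilon> (2 * k) \<omega> ^ 2 * \<epsilon> (2 * k + 1) \<omega> ^ 2 \<partial>M) - 2 * \<rho> * (\<integral>\<omega>. \<epsilon> (2 * k) \<omega> * \<epsilon> (2 * k + 1) \<omega> \<partial>M) + \<rho>\<^sup>2"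
    using i4 i2 by (simp add: ps.prob_space)
  finally show ?thesis unfolding e4 e2 by (simp add: power2_eq_square)
qed

end

context BLoc begin

lemma comp_snd_meas[measurable]: "1 \<le> k \<Longrightarrow> (\<lambda>y. snd (y k)) \<in> borel_measurable (PiM {1..} (\<lambda>_. borel \<Otimes>\<^sub>M borel))"
  by (rule measurable_compose[OF measurable_component_singleton[of k "{1..}"] measurable_snd]) auto

lemma dd_meas_all[measurable]: "dd k \<in> borel_measurable (PiM {1..} (\<lambda>_. count_space UNIV))"
  by (rule dd_meas) auto

lemma Y2_eps: "1 \<le> k \<Longrightarrow> snd (Y2 \<omega> k) = \<epsilon> k \<omega>" unfolding Y2_def by simp

lemma D_Y1: "real (delta \<zeta> k \<omega>) = dd k (Y1 \<omega>)"
  unfolding Y1_def by (rule delta_dd) auto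

lemma zeta_Y1: "1 \<le> k \<Longrightarrow> \<zeta> k \<omega> = Y1 \<omega> k" unfolding Y1_def by simp

lemma HIfact:
  fixes F :: "(nat \<Rightarrow> nat \<times> nat) \<Rightarrow> real" and G :: "(nat \<Rightarrow> real \<times> real) \<Rightarrow> real"
  assumes "F \<in> borel_measurable (PiM {1..} (\<lambda>_. count_space UNIV))"
    "G \<in> borel_measurable (PiM {1..} (\<lambda>_. borel \<Otimes>\<^sub>M borel))"
    "integrable M (\<lambda>\<omega>. F (Y1 \<omega>))" "integrable M (\<lambda>\<omega>. G (Y2 \<omega>))"
  shows "(\<integral>\<omega>. F (Y1 \<omega>) * G (Y2 \<omega>) \<partial>M) = (\<integral>\<omega>. F (Y1 \<omega>) \<partial>M) * (\<integral>\<omega>. G (Y2 \<omega>) \<partial>M)"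
proof -
  have Y1': "Y1 = (\<lambda>\<omega>. restrict (\<lambda>k. \<zeta> k \<omega>) {1..})" by (simp add: Y1_def fun_eq_iff)
  have Y2': "Y2 = (\<lambda>\<omega>. restrict (\<lambda>k. (X k \<omega>, \<epsilon> k \<omega>)) {1..})" by (simp add: Y2_def fun_eq_iff)
  have HI': "ps.indep_set (gen_events M (PiM {1..} (\<lambda>_. count_space (UNIV :: (nat \<times> nat) set))) Y1)
      (gen_events M (PiM {1..} (\<lambda>_. borel \<Otimes>\<^sub>M borel)) Y2)"
    using HI by (simp add: Y1' Y2')
  show ?thesis
    apply (rule indep_gen_integral(1)[where F=F and G=G and ?Y1.0=Y1 and ?Y2.0=Y2])
    apply (rule prob)
    apply (rule HI')
    apply (rule assms)
    apply (rule assms)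
    apply (rule Y1_meas)
    apply (rule Y2_meas)
    apply (rule assms)
    apply (rule assms)
    done
qed

lemma int_bounded_mult:
  fixes f g :: "'a \<Rightarrow> real"
  assumes "integrable M g" "f \<in> borel_measurable M" "\<And>\<omega>. \<omega> \<in> space M \<Longrightarrow> \<bar>f \<omega>\<bar> \<le> 1"
  shows "integrable M (\<lambda>\<omega>. f \<omega> * g \<omega>)"
proof (rule Bochner_Integration.integrable_bound[OF assms(1)])
  show "(\<lambda>\<omega>. f \<omega> * g \<omega>) \<in> borel_measurable M" using assms(2) borel_measurable_integrable[OF assms(1)] by measurable
  show "AE \<omega> in M. norm (f \<omega> * g \<omega>) \<le> norm (g \<omega>)"
  proof (rule AE_I2)
    fix \<omega> assume "\<omega> \<in> space M"
    then have "\<bar>f \<omega>\<bar> \<le> 1" by (rule assms(3))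
    then show "norm (f \<omega> * g \<omega>) \<le> norm (g \<omega>)"
      using mult_right_mono[of "\<bar>f \<omega>\<bar>" 1 "\<bar>g \<omega>\<bar>"] by (simp add: abs_mult)
  qed
qed

lemma D_abs: "\<omega> \<in> space M \<Longrightarrow> \<bar>real (delta \<zeta> k \<omega>)\<bar> \<le> 1"
  using D01[of \<omega> k] by auto

lemma D_sq: "\<omega> \<in> space M \<Longrightarrow> (real (delta \<zeta> k \<omega>))\<^sup>2 = real (delta \<zeta> k \<omega>)"
  using D01[of \<omega> k] by auto

lemma D_prod_abs: "\<omega> \<in> space M \<Longrightarrow> \<bar>real (delta \<zeta> k \<omega>) * real (delta \<zeta> l \<omega>)\<bar> \<le> 1"
  using D01[of \<omega> k] D01[of \<omega> l] by auto

lemma D_prod_le: "\<omega> \<in> space M \<Longrightarrow> real (delta \<zeta> k \<omega>) * real (delta \<zeta> l \<omega>) \<le> 1"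
  using D01[of \<omega> k] D01[of \<omega> l] by auto

definition U1 where "U1 k \<omega> = real (delta \<zeta> k \<omega>) * (\<epsilon> k \<omega> ^ 2 - \<sigma>2)"

lemma U1_prod_int: assumes "2 \<le> k" "2 \<le> l" shows "integrable M (\<lambda>\<omega>. U1 k \<omega> * U1 l \<omega>)"
proof -
  have "integrable M (\<lambda>\<omega>. (real (delta \<zeta> k \<omega>) * real (delta \<zeta> l \<omega>)) * ((\<epsilon> k \<omega> ^ 2 - \<sigma>2) * (\<epsilon> l \<omega> ^ 2 - \<sigma>2)))"
    by (rule int_bounded_mult[OF int_sq_prod[OF assms]]) (auto intro: D_prod_abs D_prod_le)
  then show ?thesis unfolding U1_def by (simp add: algebra_simps)
qed

lemma U1_orth: assumes "k \<in> Kset i n" "l \<in> Kset i n" "k \<noteq> l"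
  shows "(\<integral>\<omega>. U1 k \<omega> * U1 l \<omega> \<partial>M) = 0"
proof -
  have k: "1 \<le> k" "1 \<le> l" using Kset_ge2 assms by fastforce+
  have "(\<integral>\<omega>. U1 k \<omega> * U1 l \<omega> \<partial>M) = (\<integral>\<omega>. (dd k (Y1 \<omega>) * dd l (Y1 \<omega>)) * ((snd (Y2 \<omega> k) ^ 2 - \<sigma>2) * (snd (Y2 \<omega> l) ^ 2 - \<sigma>2)) \<partial>M)"
    unfolding U1_def D_Y1 using k by (simp add: Y2_eps algebra_simps)
  also have "\<dots> = (\<integral>\<omega>. dd k (Y1 \<omega>) * dd l (Y1 \<omega>) \<partial>M) * (\<integral>\<omega>. (snd (Y2 \<omega> k) ^ 2 - \<sigma>2) * (snd (Y2 \<omega> l) ^ 2 - \<sigma>2) \<partial>M)"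
  proof (rule HIfact[where F="\<lambda>x. dd k x * dd l x" and G="\<lambda>y. (snd (y k) ^ 2 - \<sigma>2) * (snd (y l) ^ 2 - \<sigma>2)"])
    show "(\<lambda>x. dd k x * dd l x) \<in> borel_measurable (PiM {1..} (\<lambda>_. count_space UNIV))"
      by measurable
    show "(\<lambda>y. (snd (y k) ^ 2 - \<sigma>2) * (snd (y l) ^ 2 - \<sigma>2)) \<in> borel_measurable (PiM {1..} (\<lambda>_. borel \<Otimes>\<^sub>M borel))"
      using k by measurable
    show "integrable M (\<lambda>\<omega>. dd k (Y1 \<omega>) * dd l (Y1 \<omega>))"
      unfolding D_Y1[symmetric]
      by (rule bounded_int[where B=1]) (auto intro: D_prod_abs D_prod_le)
    show "integrable M (\<lambda>\<omega>. (snd (Y2 \<omega> k) ^ 2 - \<sigma>2) * (snd (Y2 \<omega> l) ^ 2 - \<sigma>2))"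
      using int_sq_prod[of k l] Kset_ge2 assms k by (simp add: Y2_eps)
  qed
  also have "(\<integral>\<omega>. (snd (Y2 \<omega> k) ^ 2 - \<sigma>2) * (snd (Y2 \<omega> l) ^ 2 - \<sigma>2) \<partial>M) = 0"
    using orth1[OF assms] k by (simp add: Y2_eps)
  finally show ?thesis by simp
qed

end

context BLoc begin

lemma U1_sq: assumes k: "k \<in> Kset i n" shows "(\<integral>\<omega>. (U1 k \<omega>)\<^sup>2 \<partial>M) = ED k * (\<tau>4 - \<sigma>2\<^sup>2)"
proof -
  obtain m where m: "k \<in> Gen (Suc m)" using Kset_Gen k by blast
  have k1: "1 \<le> k" and k2: "2 \<le> k" using Kset_ge2[OF k] by auto
  have "(\<integral>\<omega>. (U1 k \<omega>)\<^sup>2 \<partial>M) = (\<integral>\<omega>. dd k (Y1 \<omega>) * (snd (Y2 \<omega> k) ^ 2 - \<sigma>2)\<^sup>2 \<partial>M)"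
  proof (rule Bochner_Integration.integral_cong)
    fix \<omega> assume "\<omega> \<in> space M"
    have "(U1 k \<omega>)\<^sup>2 = real (delta \<zeta> k \<omega>) * (\<epsilon> k \<omega> ^ 2 - \<sigma>2)\<^sup>2"
      unfolding U1_def power_mult_distrib D_sq[OF \<open>\<omega> \<in> space M\<close>] by (rule refl)
    then show "(U1 k \<omega>)\<^sup>2 = dd k (Y1 \<omega>) * (snd (Y2 \<omega> k) ^ 2 - \<sigma>2)\<^sup>2"
      using k1 by (simp add: D_Y1 Y2_eps)
  qed simp
  also have "\<dots> = (\<integral>\<omega>. dd k (Y1 \<omega>) \<partial>M) * (\<integral>\<omega>. (snd (Y2 \<omega> k) ^ 2 - \<sigma>2)\<^sup>2 \<partial>M)"
  proof (rule HIfact[where F="dd k" and G="\<lambda>y. (snd (y k) ^ 2 - \<sigma>2)\<^sup>2"])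
    show "(\<lambda>y. (snd (y k) ^ 2 - \<sigma>2)\<^sup>2) \<in> borel_measurable (PiM {1..} (\<lambda>_. borel \<Otimes>\<^sub>M borel))"
      using k1 by measurable
    show "integrable M (\<lambda>\<omega>. dd k (Y1 \<omega>))" using D_int[of k] by (simp add: D_Y1)
    show "integrable M (\<lambda>\<omega>. (snd (Y2 \<omega> k) ^ 2 - \<sigma>2)\<^sup>2)"
      using int_sq_prod[OF k2 k2] k1 by (simp add: Y2_eps power2_eq_square)
  qed (rule dd_meas_all)
  also have "(\<integral>\<omega>. dd k (Y1 \<omega>) \<partial>M) = ED k" unfolding ED_def D_Y1 ..
  also have "(\<integral>\<omega>. (snd (Y2 \<omega> k) ^ 2 - \<sigma>2)\<^sup>2 \<partial>M) = \<tau>4 - \<sigma>2\<^sup>2"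
    using mom1[OF m] k1 by (simp add: Y2_eps)
  finally show ?thesis .
qed

lemma N1_L2: "integrable M (\<lambda>\<omega>. (\<Sum>k\<in>Kset i n. U1 k \<omega>)\<^sup>2)"
  "(\<integral>\<omega>. (\<Sum>k\<in>Kset i n. U1 k \<omega>)\<^sup>2 \<partial>M) \<le> \<bar>\<tau>4 - \<sigma>2\<^sup>2\<bar> * CK * \<pi> ^ n"
proof -
  have iU: "\<And>k l. k \<in> Kset i n \<Longrightarrow> l \<in> Kset i n \<Longrightarrow> integrable M (\<lambda>\<omega>. U1 k \<omega> * U1 l \<omega>)"
    using U1_prod_int Kset_ge2 by blast
  show "integrable M (\<lambda>\<omega>. (\<Sum>k\<in>Kset i n. U1 k \<omega>)\<^sup>2)"
    by (rule L2sum(2)[OF finite_Kset iU U1_orth]) auto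
  have "(\<integral>\<omega>. (\<Sum>k\<in>Kset i n. U1 k \<omega>)\<^sup>2 \<partial>M) = (\<Sum>k\<in>Kset i n. \<integral>\<omega>. (U1 k \<omega>)\<^sup>2 \<partial>M)"
    by (rule L2sum(1)[OF finite_Kset iU U1_orth]) auto
  also have "\<dots> = (\<Sum>k\<in>Kset i n. ED k * (\<tau>4 - \<sigma>2\<^sup>2))" by (intro sum.cong refl U1_sq)
  also have "\<dots> \<le> (\<Sum>k\<in>Kset i n. ED k * \<bar>\<tau>4 - \<sigma>2\<^sup>2\<bar>)"
    by (intro sum_mono mult_left_mono ED_nonneg) auto
  also have "\<dots> = (\<Sum>k\<in>Kset i n. ED k) * \<bar>\<tau>4 - \<sigma>2\<^sup>2\<bar>" by (rule sum_distrib_right[symmetric])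
  also have "\<dots> \<le> (CK * \<pi> ^ n) * \<bar>\<tau>4 - \<sigma>2\<^sup>2\<bar>"
    using i01 by (intro mult_right_mono EK_bound) auto
  finally show "(\<integral>\<omega>. (\<Sum>k\<in>Kset i n. U1 k \<omega>)\<^sup>2 \<partial>M) \<le> \<bar>\<tau>4 - \<sigma>2\<^sup>2\<bar> * CK * \<pi> ^ n" by (simp add: mult_ac)
qed


definition qq where "qq k \<omega> = real (fst (\<zeta> k \<omega>) * snd (\<zeta> k \<omega>))"
definition A3 where "A3 k x = dd k x * real (fst (x k) * snd (x k))"

lemma A3_meas[measurable]: "1 \<le> k \<Longrightarrow> A3 k \<in> borel_measurable (PiM {1..} (\<lambda>_. count_space UNIV))"
proof -
  assume k: "1 \<le> k"
  have "(\<lambda>x. real (fst (x k) * snd (x k))) \<in> borel_measurable (PiM {1..} (\<lambda>_. count_space (UNIV :: (nat \<times> nat) set)))"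
    by (rule measurable_compose[OF measurable_component_singleton]) (use k in auto)
  then show ?thesis unfolding A3_def by measurable
qed

lemma A3_Y1: "1 \<le> k \<Longrightarrow> real (delta \<zeta> k \<omega>) * qq k \<omega> = A3 k (Y1 \<omega>)"
  unfolding A3_def qq_def D_Y1 by (simp add: zeta_Y1)

lemma qq01: "\<omega> \<in> space M \<Longrightarrow> qq k \<omega> \<in> {0, 1}"
  using zeta_val[of \<omega> k] unfolding qq_def by (auto simp: mem_Times_iff)

lemma Dq01: "\<omega> \<in> space M \<Longrightarrow> real (delta \<zeta> k \<omega>) * qq k \<omega> \<in> {0, 1}"
  using D01[of \<omega> k] qq01[of \<omega> k] by auto

lemma Dq_abs: "\<omega> \<in> space M \<Longrightarrow> \<bar>real (delta \<zeta> k \<omega>) * qq k \<omega>\<bar> \<le> 1"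
  using Dq01[of \<omega> k] by auto

lemma qq_abs: "\<omega> \<in> space M \<Longrightarrow> \<bar>qq k \<omega>\<bar> \<le> 1"
  using qq01[of \<omega> k] by auto

lemma qq_meas[measurable]: "1 \<le> k \<Longrightarrow> qq k \<in> borel_measurable M"
  unfolding qq_def by (rule zeta_meas_fun)

definition U3 where "U3 k \<omega> = real (delta \<zeta> k \<omega>) * qq k \<omega> * (\<epsilon> (2 * k) \<omega> * \<epsilon> (2 * k + 1) \<omega> - \<rho>)"

lemma U3_prod_int: assumes "1 \<le> k" "1 \<le> l" shows "integrable M (\<lambda>\<omega>. U3 k \<omega> * U3 l \<omega>)"
proof -
  have "integrable M (\<lambda>\<omega>. ((real (delta \<zeta> k \<omega>) * qq k \<omega>) * (real (delta \<zeta> l \<omega>) * qq l \<omega>)) *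
      ((\<epsilon> (2 * k) \<omega> * \<epsilon> (2 * k + 1) \<omega> - \<rho>) * (\<epsilon> (2 * l) \<omega> * \<epsilon> (2 * l + 1) \<omega> - \<rho>)))"
  proof (rule int_bounded_mult)
    show "integrable M (\<lambda>\<omega>. (\<epsilon> (2 * k) \<omega> * \<epsilon> (2 * k + 1) \<omega> - \<rho>) * (\<epsilon> (2 * l) \<omega> * \<epsilon> (2 * l + 1) \<omega> - \<rho>))"
      by (rule int_pair_prod) (use assms in auto)
    show "(\<lambda>\<omega>. real (delta \<zeta> k \<omega>) * qq k \<omega> * (real (delta \<zeta> l \<omega>) * qq l \<omega>)) \<in> borel_measurable M"
      using assms by measurable
    fix \<omega> assume "\<omega> \<in> space M"
    then show "\<bar>real (delta \<zeta> k \<omega>) * qq k \<omega> * (real (delta \<zeta> l \<omega>) * qq l \<omega>)\<bar> \<le> 1"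
      using Dq01[of \<omega> k] Dq01[of \<omega> l] by auto
  qed
  then show ?thesis unfolding U3_def by (simp add: algebra_simps)
qed

lemma U3_orth: assumes "k \<in> Kset i n" "l \<in> Kset i n" "k \<noteq> l"
  shows "(\<integral>\<omega>. U3 k \<omega> * U3 l \<omega> \<partial>M) = 0"
proof -
  have k: "1 \<le> k" "1 \<le> l" using Kset_ge2 assms by fastforce+
  have e: "1 \<le> 2 * k" "1 \<le> 2 * k + 1" "1 \<le> 2 * l" "1 \<le> 2 * l + 1" using k by auto
  have "(\<integral>\<omega>. U3 k \<omega> * U3 l \<omega> \<partial>M) = (\<integral>\<omega>. (A3 k (Y1 \<omega>) * A3 l (Y1 \<omega>)) *
      ((snd (Y2 \<omega> (2 * k)) * snd (Y2 \<omega> (2 * k + 1)) - \<rho>) * (snd (Y2 \<omega> (2 * l)) * snd (Y2 \<omega> (2 * l + 1)) - \<rho>)) \<partial>M)"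
    unfolding U3_def A3_Y1[OF k(1), symmetric] A3_Y1[OF k(2), symmetric] Y2_eps[OF e(1)] Y2_eps[OF e(2)] Y2_eps[OF e(3)] Y2_eps[OF e(4)]
    by (simp add: algebra_simps)
  also have "\<dots> = (\<integral>\<omega>. A3 k (Y1 \<omega>) * A3 l (Y1 \<omega>) \<partial>M) * (\<integral>\<omega>. (snd (Y2 \<omega> (2 * k)) * snd (Y2 \<omega> (2 * k + 1)) - \<rho>) * (snd (Y2 \<omega> (2 * l)) * snd (Y2 \<omega> (2 * l + 1)) - \<rho>) \<partial>M)"
  proof (rule HIfact[where F="\<lambda>x. A3 k x * A3 l x" and G="\<lambda>y. (snd (y (2 * k)) * snd (y (2 * k + 1)) - \<rho>) * (snd (y (2 * l)) * snd (y (2 * l + 1)) - \<rho>)"])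
    show "(\<lambda>x. A3 k x * A3 l x) \<in> borel_measurable (PiM {1..} (\<lambda>_. count_space UNIV))"
      using k by measurable
    show "(\<lambda>y. (snd (y (2 * k)) * snd (y (2 * k + 1)) - \<rho>) * (snd (y (2 * l)) * snd (y (2 * l + 1)) - \<rho>)) \<in> borel_measurable (PiM {1..} (\<lambda>_. borel \<Otimes>\<^sub>M borel))"
      using e by measurable
    show "integrable M (\<lambda>\<omega>. A3 k (Y1 \<omega>) * A3 l (Y1 \<omega>))"
      unfolding A3_Y1[OF k(1), symmetric] A3_Y1[OF k(2), symmetric]
    proof (rule bounded_int[where B=1])
      show "(\<lambda>\<omega>. real (delta \<zeta> k \<omega>) * qq k \<omega> * (real (delta \<zeta> l \<omega>) * qq l \<omega>)) \<in> borel_measurable M"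
        using k by measurable
      fix \<omega> assume "\<omega> \<in> space M"
      then show "\<bar>real (delta \<zeta> k \<omega>) * qq k \<omega> * (real (delta \<zeta> l \<omega>) * qq l \<omega>)\<bar> \<le> 1"
        using Dq01[of \<omega> k] Dq01[of \<omega> l] by auto
    qed
    show "integrable M (\<lambda>\<omega>. (snd (Y2 \<omega> (2 * k)) * snd (Y2 \<omega> (2 * k + 1)) - \<rho>) * (snd (Y2 \<omega> (2 * l)) * snd (Y2 \<omega> (2 * l + 1)) - \<rho>))"
      unfolding Y2_eps[OF e(1)] Y2_eps[OF e(2)] Y2_eps[OF e(3)] Y2_eps[OF e(4)]
      by (rule int_pair_prod) (use k in auto)
  qed
  also have "(\<integral>\<omega>. (snd (Y2 \<omega> (2 * k)) * snd (Y2 \<omega> (2 * k + 1)) - \<rho>) * (snd (Y2 \<omega> (2 * l)) * snd (Y2 \<omega> (2 * l + 1)) - \<rho>) \<partial>M) = 0"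
    unfolding Y2_eps[OF e(1)] Y2_eps[OF e(2)] Y2_eps[OF e(3)] Y2_eps[OF e(4)] by (rule orth3[OF assms])
  finally show ?thesis by simp
qed

definition C3 where "C3 = \<nu>2 * \<tau>4 - \<rho>\<^sup>2"

lemma U3_sq: assumes k: "k \<in> Kset i n" shows "(\<integral>\<omega>. (U3 k \<omega>)\<^sup>2 \<partial>M) \<le> ED k * C3"
proof -
  obtain m where m: "k \<in> Gen (Suc m)" using Kset_Gen k by blast
  have k1: "1 \<le> k" using Kset_ge2[OF k] by auto
  have e: "1 \<le> 2 * k" "1 \<le> 2 * k + 1" "2 \<le> 2 * k" "2 \<le> 2 * k + 1" using k1 by auto
  have "(\<integral>\<omega>. (U3 k \<omega>)\<^sup>2 \<partial>M) = (\<integral>\<omega>. A3 k (Y1 \<omega>) * (snd (Y2 \<omega> (2 * k)) * snd (Y2 \<omega> (2 * k + 1)) - \<rho>)\<^sup>2 \<partial>M)"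
  proof (rule Bochner_Integration.integral_cong)
    fix \<omega> assume w: "\<omega> \<in> space M"
    have sq: "(real (delta \<zeta> k \<omega>) * qq k \<omega>)\<^sup>2 = real (delta \<zeta> k \<omega>) * qq k \<omega>" using Dq01[OF w, of k] by auto
    have "(U3 k \<omega>)\<^sup>2 = (real (delta \<zeta> k \<omega>) * qq k \<omega>)\<^sup>2 * (\<epsilon> (2 * k) \<omega> * \<epsilon> (2 * k + 1) \<omega> - \<rho>)\<^sup>2"
      unfolding U3_def by (simp add: power_mult_distrib)
    also have "\<dots> = (real (delta \<zeta> k \<omega>) * qq k \<omega>) * (\<epsilon> (2 * k) \<omega> * \<epsilon> (2 * k + 1) \<omega> - \<rho>)\<^sup>2"
      by (simp only: sq)
    finally show "(U3 k \<omega>)\<^sup>2 = A3 k (Y1 \<omega>) * (snd (Y2 \<omega> (2 * k)) * snd (Y2 \<omega> (2 * k + 1)) - \<rho>)\<^sup>2"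
      by (simp only: A3_Y1[OF k1] Y2_eps[OF e(1)] Y2_eps[OF e(2)])
  qed simp
  also have "\<dots> = (\<integral>\<omega>. A3 k (Y1 \<omega>) \<partial>M) * (\<integral>\<omega>. (snd (Y2 \<omega> (2 * k)) * snd (Y2 \<omega> (2 * k + 1)) - \<rho>)\<^sup>2 \<partial>M)"
  proof (rule HIfact[where F="A3 k" and G="\<lambda>y. (snd (y (2 * k)) * snd (y (2 * k + 1)) - \<rho>)\<^sup>2"])
    show "A3 k \<in> borel_measurable (PiM {1..} (\<lambda>_. count_space UNIV))" using k1 by measurable
    show "(\<lambda>y. (snd (y (2 * k)) * snd (y (2 * k + 1)) - \<rho>)\<^sup>2) \<in> borel_measurable (PiM {1..} (\<lambda>_. borel \<Otimes>\<^sub>M borel))"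
      using e by measurable
    show "integrable M (\<lambda>\<omega>. A3 k (Y1 \<omega>))" unfolding A3_Y1[OF k1, symmetric]
      by (rule bounded_int[where B=1]) (use k1 Dq_abs in auto)
    show "integrable M (\<lambda>\<omega>. (snd (Y2 \<omega> (2 * k)) * snd (Y2 \<omega> (2 * k + 1)) - \<rho>)\<^sup>2)"
      unfolding Y2_eps[OF e(1)] Y2_eps[OF e(2)] power2_eq_square by (rule int_pair_prod) (use e in auto)
  qed
  also have "(\<integral>\<omega>. (snd (Y2 \<omega> (2 * k)) * snd (Y2 \<omega> (2 * k + 1)) - \<rho>)\<^sup>2 \<partial>M) = C3"
    unfolding Y2_eps[OF e(1)] Y2_eps[OF e(2)] C3_def by (rule mom3[OF m])
  also have "(\<integral>\<omega>. A3 k (Y1 \<omega>) \<partial>M) \<le> ED k"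
  proof -
    have "(\<integral>\<omega>. A3 k (Y1 \<omega>) \<partial>M) = (\<integral>\<omega>. real (delta \<zeta> k \<omega>) * qq k \<omega> \<partial>M)" unfolding A3_Y1[OF k1] ..
    also have "\<dots> \<le> (\<integral>\<omega>. real (delta \<zeta> k \<omega>) \<partial>M)"
    proof (rule integral_mono)
      show "integrable M (\<lambda>\<omega>. real (delta \<zeta> k \<omega>) * qq k \<omega>)"
        by (rule bounded_int[where B=1]) (use k1 Dq_abs in auto)
      show "integrable M (\<lambda>\<omega>. real (delta \<zeta> k \<omega>))" by (rule D_int)
      fix \<omega> assume "\<omega> \<in> space M"
      then show "real (delta \<zeta> k \<omega>) * qq k \<omega> \<le> real (delta \<zeta> k \<omega>)"
        using qq01[of \<omega> k] by auto
    qed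
    finally show ?thesis unfolding ED_def .
  qed
  then have "(\<integral>\<omega>. A3 k (Y1 \<omega>) \<partial>M) * C3 \<le> ED k * C3"
  proof (rule mult_right_mono)
    have h: "C3 = (\<integral>\<omega>. (\<epsilon> (2 * k) \<omega> * \<epsilon> (2 * k + 1) \<omega> - \<rho>)\<^sup>2 \<partial>M)"
      unfolding C3_def by (rule mom3[OF m, symmetric])
    show "0 \<le> C3" unfolding h by (rule Bochner_Integration.integral_nonneg) simp
  qed
  finally show ?thesis .
qed

lemma N3_L2: "integrable M (\<lambda>\<omega>. (\<Sum>k\<in>Kset i n. U3 k \<omega>)\<^sup>2)"
  "(\<integral>\<omega>. (\<Sum>k\<in>Kset i n. U3 k \<omega>)\<^sup>2 \<partial>M) \<le> \<bar>C3\<bar> * CK * \<pi> ^ n"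
proof -
  have iU: "\<And>k l. k \<in> Kset i n \<Longrightarrow> l \<in> Kset i n \<Longrightarrow> integrable M (\<lambda>\<omega>. U3 k \<omega> * U3 l \<omega>)"
    using U3_prod_int Kset_ge2 by (meson le_trans one_le_numeral)
  show "integrable M (\<lambda>\<omega>. (\<Sum>k\<in>Kset i n. U3 k \<omega>)\<^sup>2)"
    by (rule L2sum(2)[OF finite_Kset iU U3_orth]) auto
  have "(\<integral>\<omega>. (\<Sum>k\<in>Kset i n. U3 k \<omega>)\<^sup>2 \<partial>M) = (\<Sum>k\<in>Kset i n. \<integral>\<omega>. (U3 k \<omega>)\<^sup>2 \<partial>M)"
    by (rule L2sum(1)[OF finite_Kset iU U3_orth]) auto
  also have "\<dots> \<le> (\<Sum>k\<in>Kset i n. ED k * \<bar>C3\<bar>)"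
    by (intro sum_mono order.trans[OF U3_sq] mult_left_mono ED_nonneg) auto
  also have "\<dots> = (\<Sum>k\<in>Kset i n. ED k) * \<bar>C3\<bar>" by (rule sum_distrib_right[symmetric])
  also have "\<dots> \<le> (CK * \<pi> ^ n) * \<bar>C3\<bar>"
    using i01 by (intro mult_right_mono EK_bound) auto
  finally show "(\<integral>\<omega>. (\<Sum>k\<in>Kset i n. U3 k \<omega>)\<^sup>2 \<partial>M) \<le> \<bar>C3\<bar> * CK * \<pi> ^ n" by (simp add: mult_ac)
qed


lemma p_le1: "i' \<le> 1 \<Longrightarrow> p i' j0 j1 \<le> 1"
proof -
  assume "i' \<le> 1"
  then have "i' = 0 \<or> i' = 1" by auto
  then obtain k where "1 \<le> k" "k mod 2 = i'" by (metis le_numeral_extra(4) mod_self one_le_numeral mod_less one_less_numeral_iff semiring_norm(76))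
  then show ?thesis using zeta_law[of k j0 j1] ps.prob_le_1 by metis
qed

definition pp where "pp = p i 1 1"

lemma pp_bounds: "0 \<le> pp" "pp \<le> 1"
  unfolding pp_def using i01 p_nonneg[of i 1 1] p_le1[of i 1 1] by auto

lemma qp_abs: "\<omega> \<in> space M \<Longrightarrow> \<bar>qq k \<omega> - pp\<bar> \<le> 1"
  using qq01[of \<omega> k] pp_bounds by auto

definition U2 where "U2 k \<omega> = real (delta \<zeta> k \<omega>) * (qq k \<omega> - pp)"

lemma U2_meas[measurable]: "1 \<le> k \<Longrightarrow> U2 k \<in> borel_measurable M"
  unfolding U2_def by measurable

lemma U2_abs: "\<omega> \<in> space M \<Longrightarrow> \<bar>U2 k \<omega>\<bar> \<le> 1"
  unfolding U2_def using D_abs[of \<omega> k] qp_abs[of \<omega> k] by (auto simp: abs_mult intro: mult_le_one)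

lemma U2_prod_int: "1 \<le> k \<Longrightarrow> 1 \<le> l \<Longrightarrow> integrable M (\<lambda>\<omega>. U2 k \<omega> * U2 l \<omega>)"
  by (rule bounded_int[where B=1]) (auto simp: abs_mult intro: mult_le_one U2_abs)

lemma E_qq: "1 \<le> l \<Longrightarrow> (\<integral>\<omega>. qq l \<omega> \<partial>M) = p (l mod 2) 1 1"
proof -
  assume l: "1 \<le> l"
  have "(\<integral>\<omega>. real ((\<lambda>v. fst v * snd v) (\<zeta> l \<omega>)) \<partial>M) = (\<Sum>v\<in>{(1,1)}. p (l mod 2) (fst v) (snd v))"
    by (rule E_zeta_fun[OF l]) auto
  then show ?thesis unfolding qq_def by simp
qed

lemma U2_orth_aux: assumes k: "k \<in> Kset i n" and l: "l \<in> Kset i n" and kl: "k < l"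
  shows "(\<integral>\<omega>. U2 k \<omega> * U2 l \<omega> \<partial>M) = 0"
proof -
  have k1: "1 \<le> k" and l1: "1 \<le> l" using Kset_ge2 k l by fastforce+
  define G where "G x = dd k x * (real (fst (x k) * snd (x k)) - pp) * dd l x" for x :: "nat \<Rightarrow> nat \<times> nat"
  define H where "H v = real (fst v * snd v) - pp" for v :: "nat \<times> nat"
  have eq: "U2 k \<omega> * U2 l \<omega> = G (restrict (\<lambda>j. \<zeta> j \<omega>) {1..<l}) * H (\<zeta> l \<omega>)" for \<omega>
  proof -
    have "real (delta \<zeta> k \<omega>) = dd k (restrict (\<lambda>j. \<zeta> j \<omega>) {1..<l})" by (rule delta_dd) (use kl in auto)
    moreover have "real (delta \<zeta> l \<omega>) = dd l (restrict (\<lambda>j. \<zeta> j \<omega>) {1..<l})" by (rule delta_dd) auto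
    moreover have "restrict (\<lambda>j. \<zeta> j \<omega>) {1..<l} k = \<zeta> k \<omega>" using k1 kl by simp
    ultimately show ?thesis unfolding U2_def G_def H_def qq_def by (simp add: algebra_simps)
  qed
  have "(\<integral>\<omega>. U2 k \<omega> * U2 l \<omega> \<partial>M) = (\<integral>\<omega>. G (restrict (\<lambda>j. \<zeta> j \<omega>) {1..<l}) * H (\<zeta> l \<omega>) \<partial>M)"
    unfolding eq ..
  also have "\<dots> = (\<integral>\<omega>. G (restrict (\<lambda>j. \<zeta> j \<omega>) {1..<l}) \<partial>M) * (\<integral>\<omega>. H (\<zeta> l \<omega>) \<partial>M)"
  proof (rule zeta_split[OF l1])
    have "(\<lambda>x. real (fst (x k) * snd (x k))) \<in> borel_measurable (PiM {1..<l} (\<lambda>_. count_space (UNIV :: (nat \<times> nat) set)))"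
      by (rule measurable_compose[OF measurable_component_singleton]) (use k1 kl in auto)
    moreover have "dd k \<in> borel_measurable (PiM {1..<l} (\<lambda>_. count_space UNIV))" by (rule dd_meas) (use kl in auto)
    moreover have "dd l \<in> borel_measurable (PiM {1..<l} (\<lambda>_. count_space UNIV))" by (rule dd_meas) auto
    ultimately show "G \<in> borel_measurable (PiM {1..<l} (\<lambda>_. count_space UNIV))" unfolding G_def by measurable
    show "integrable M (\<lambda>\<omega>. G (restrict (\<lambda>j. \<zeta> j \<omega>) {1..<l}))"
    proof -
      have "G (restrict (\<lambda>j. \<zeta> j \<omega>) {1..<l}) = U2 k \<omega> * real (delta \<zeta> l \<omega>)" for \<omega>
      proof -
        have "real (delta \<zeta> k \<omega>) = dd k (restrict (\<lambda>j. \<zeta> j \<omega>) {1..<l})" by (rule delta_dd) (use kl in auto)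
        moreover have "real (delta \<zeta> l \<omega>) = dd l (restrict (\<lambda>j. \<zeta> j \<omega>) {1..<l})" by (rule delta_dd) auto
        moreover have "restrict (\<lambda>j. \<zeta> j \<omega>) {1..<l} k = \<zeta> k \<omega>" using k1 kl by simp
        ultimately show ?thesis unfolding U2_def G_def qq_def by simp
      qed
      moreover have "integrable M (\<lambda>\<omega>. U2 k \<omega> * real (delta \<zeta> l \<omega>))"
      proof (rule bounded_int[where B=1])
        show "(\<lambda>\<omega>. U2 k \<omega> * real (delta \<zeta> l \<omega>)) \<in> borel_measurable M" using k1 by measurable
        fix \<omega> assume w: "\<omega> \<in> space M"
        have "\<bar>U2 k \<omega>\<bar> * \<bar>real (delta \<zeta> l \<omega>)\<bar> \<le> 1 * 1"
          by (rule mult_mono) (use U2_abs[OF w, of k] D_abs[OF w, of l] in auto)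
        then show "\<bar>U2 k \<omega> * real (delta \<zeta> l \<omega>)\<bar> \<le> 1" by (simp add: abs_mult)
      qed
      ultimately show ?thesis by simp
    qed
    show "integrable M (\<lambda>\<omega>. H (\<zeta> l \<omega>))"
      unfolding H_def using qp_abs[of _ l] l1 by (intro bounded_int[where B=1]) (auto simp: qq_def)
  qed
  also have "(\<integral>\<omega>. H (\<zeta> l \<omega>) \<partial>M) = 0"
  proof -
    have "(\<integral>\<omega>. H (\<zeta> l \<omega>) \<partial>M) = (\<integral>\<omega>. qq l \<omega> \<partial>M) - pp"
      unfolding H_def qq_def[symmetric]
      by (subst Bochner_Integration.integral_diff) (use l1 qq_abs in \<open>auto intro!: bounded_int[where B=1] simp: ps.prob_space\<close>)
    also have "\<dots> = 0" using E_qq[OF l1] Kset_Ty[OF l] unfolding pp_def Ty_def by simp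
    finally show ?thesis .
  qed
  finally show ?thesis by simp
qed

lemma U2_orth: assumes "k \<in> Kset i n" "l \<in> Kset i n" "k \<noteq> l"
  shows "(\<integral>\<omega>. U2 k \<omega> * U2 l \<omega> \<partial>M) = 0"
proof (cases "k < l")
  case True then show ?thesis by (rule U2_orth_aux[OF assms(1,2)])
next
  case False
  then have "l < k" using assms(3) by auto
  then show ?thesis using U2_orth_aux[OF assms(2,1)] by (simp add: mult.commute)
qed

lemma U2_sq: assumes k: "1 \<le> k" shows "(\<integral>\<omega>. (U2 k \<omega>)\<^sup>2 \<partial>M) \<le> ED k"
  unfolding ED_def
proof (rule integral_mono)
  show "integrable M (\<lambda>\<omega>. (U2 k \<omega>)\<^sup>2)" using U2_prod_int[OF k k] by (simp add: power2_eq_square)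
  show "integrable M (\<lambda>\<omega>. real (delta \<zeta> k \<omega>))" by (rule D_int)
  fix \<omega> assume w: "\<omega> \<in> space M"
  have "(U2 k \<omega>)\<^sup>2 = (real (delta \<zeta> k \<omega>))\<^sup>2 * (qq k \<omega> - pp)\<^sup>2" unfolding U2_def by (simp add: power_mult_distrib)
  also have "\<dots> = real (delta \<zeta> k \<omega>) * (qq k \<omega> - pp)\<^sup>2" by (simp only: D_sq[OF w])
  also have "\<dots> \<le> real (delta \<zeta> k \<omega>) * 1"
  proof (rule mult_left_mono)
    have "\<bar>qq k \<omega> - pp\<bar> \<le> 1" by (rule qp_abs[OF w])
    then have "\<bar>qq k \<omega> - pp\<bar>\<^sup>2 \<le> 1\<^sup>2" by (intro power_mono) auto
    then show "(qq k \<omega> - pp)\<^sup>2 \<le> 1" by simp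
  qed simp
  finally show "(U2 k \<omega>)\<^sup>2 \<le> real (delta \<zeta> k \<omega>)" by simp
qed

lemma N2_L2: "integrable M (\<lambda>\<omega>. (\<Sum>k\<in>Kset i n. U2 k \<omega>)\<^sup>2)"
  "(\<integral>\<omega>. (\<Sum>k\<in>Kset i n. U2 k \<omega>)\<^sup>2 \<partial>M) \<le> CK * \<pi> ^ n"
proof -
  have iU: "\<And>k l. k \<in> Kset i n \<Longrightarrow> l \<in> Kset i n \<Longrightarrow> integrable M (\<lambda>\<omega>. U2 k \<omega> * U2 l \<omega>)"
    using U2_prod_int Kset_ge2 by (meson le_trans one_le_numeral)
  show "integrable M (\<lambda>\<omega>. (\<Sum>k\<in>Kset i n. U2 k \<omega>)\<^sup>2)"
    by (rule L2sum(2)[OF finite_Kset iU U2_orth]) auto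
  have "(\<integral>\<omega>. (\<Sum>k\<in>Kset i n. U2 k \<omega>)\<^sup>2 \<partial>M) = (\<Sum>k\<in>Kset i n. \<integral>\<omega>. (U2 k \<omega>)\<^sup>2 \<partial>M)"
    by (rule L2sum(1)[OF finite_Kset iU U2_orth]) auto
  also have "\<dots> \<le> (\<Sum>k\<in>Kset i n. ED k)"
    by (intro sum_mono U2_sq) (use Kset_ge2 in fastforce)
  also have "\<dots> \<le> CK * \<pi> ^ n" using i01 by (intro EK_bound) auto
  finally show "(\<integral>\<omega>. (\<Sum>k\<in>Kset i n. U2 k \<omega>)\<^sup>2 \<partial>M) \<le> CK * \<pi> ^ n" .
qed

end

context BLoc begin

lemma U1_meas[measurable]: "U1 k \<in> borel_measurable M"
  unfolding U1_def using eps_meas by measurable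
lemma U3_meas[measurable]: "1 \<le> k \<Longrightarrow> U3 k \<in> borel_measurable M"
  unfolding U3_def using eps_meas by measurable

lemma conv1: "AE \<omega> in M. (\<lambda>n. (\<Sum>k\<in>Kset i n. U1 k \<omega>) / \<pi> ^ n) \<longlonglongrightarrow> 0"
  by (rule L2_conv[OF _ N1_L2(1) N1_L2(2) pi_gt1]) measurable

lemma conv2: "AE \<omega> in M. (\<lambda>n. (\<Sum>k\<in>Kset i n. U2 k \<omega>) / \<pi> ^ n) \<longlonglongrightarrow> 0"
proof (rule L2_conv[OF _ N2_L2(1) _ pi_gt1])
  fix n show "(\<lambda>\<omega>. \<Sum>k\<in>Kset i n. U2 k \<omega>) \<in> borel_measurable M"
    by (rule borel_measurable_sum) (use Kset_ge2 in \<open>fastforce intro: U2_meas\<close>)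
  show "(\<integral>\<omega>. (\<Sum>k\<in>Kset i n. U2 k \<omega>)\<^sup>2 \<partial>M) \<le> CK * \<pi> ^ n" by (rule N2_L2(2))
qed

lemma conv3: "AE \<omega> in M. (\<lambda>n. (\<Sum>k\<in>Kset i n. U3 k \<omega>) / \<pi> ^ n) \<longlonglongrightarrow> 0"
proof (rule L2_conv[OF _ N3_L2(1) N3_L2(2) pi_gt1])
  fix n show "(\<lambda>\<omega>. \<Sum>k\<in>Kset i n. U3 k \<omega>) \<in> borel_measurable M"
    by (rule borel_measurable_sum) (use Kset_ge2 in \<open>fastforce intro: U3_meas\<close>)
qed

lemma Zcount_sum: "\<omega> \<in> space M \<Longrightarrow> real (Zcount \<zeta> m i \<omega>) = (\<Sum>k\<in>Gen m \<inter> Ty i. real (delta \<zeta> k \<omega>))"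
proof -
  assume w: "\<omega> \<in> space M"
  have fin: "finite (Gen m \<inter> Ty i)" by simp
  have "real (Zcount \<zeta> m i \<omega>) = (\<Sum>k\<in>{k \<in> Gen m \<inter> Ty i. delta \<zeta> k \<omega> = 1}. 1)"
    unfolding Zcount_def by simp
  also have "\<dots> = (\<Sum>k\<in>Gen m \<inter> Ty i. if delta \<zeta> k \<omega> = 1 then 1 else 0)"
    by (rule sum.inter_filter[OF fin])
  also have "\<dots> = (\<Sum>k\<in>Gen m \<inter> Ty i. real (delta \<zeta> k \<omega>))"
    by (intro sum.cong refl) (use D01[OF w] in fastforce)
  finally show ?thesis .
qed

lemma sD_eq: "\<omega> \<in> space M \<Longrightarrow> (\<Sum>k\<in>Kset i n. real (delta \<zeta> k \<omega>)) = (\<Sum>m<n. real (Zcount \<zeta> (Suc m) i \<omega>))"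
  unfolding sum_Kset by (simp add: Zcount_sum)

lemma main_L:
  "AE \<omega> in M.
      (\<lambda>n. (\<Sum>k\<in>Tr n \<inter> Ty i - Tr 0. \<epsilon> k \<omega> ^ 2 * real (delta \<zeta> k \<omega>)) / \<pi> ^ n)
        \<longlonglongrightarrow> \<sigma>2 * (\<pi> / (\<pi> - 1)) * W \<omega> * z i
    \<and> (\<lambda>n. (\<Sum>k\<in>Tr n \<inter> Ty i - Tr 0.
            real (delta \<zeta> (2*k) \<omega> * delta \<zeta> (2*k+1) \<omega>) * \<epsilon> (2*k) \<omega> * \<epsilon> (2*k+1) \<omega>) / \<pi> ^ n)
        \<longlonglongrightarrow> \<rho> * p i 1 1 * (\<pi> / (\<pi> - 1)) * W \<omega> * z i"
  using W_lim conv1 conv2 conv3 AE_space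
proof eventually_elim
  fix \<omega> assume Wl: "\<forall>j\<in>{0,1}. (\<lambda>n. real (Zcount \<zeta> n j \<omega>) / \<pi> ^ n) \<longlonglongrightarrow> W \<omega> * z j"
    and c1: "(\<lambda>n. (\<Sum>k\<in>Kset i n. U1 k \<omega>) / \<pi> ^ n) \<longlonglongrightarrow> 0"
    and c2: "(\<lambda>n. (\<Sum>k\<in>Kset i n. U2 k \<omega>) / \<pi> ^ n) \<longlonglongrightarrow> 0"
    and c3: "(\<lambda>n. (\<Sum>k\<in>Kset i n. U3 k \<omega>) / \<pi> ^ n) \<longlonglongrightarrow> 0"
    and w: "\<omega> \<in> space M"
  define s where "s n = (\<Sum>k\<in>Kset i n. real (delta \<zeta> k \<omega>))" for n
  have sl: "(\<lambda>n. s n / \<pi> ^ n) \<longlonglongrightarrow> W \<omega> * z i * (\<pi> / (\<pi> - 1))"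
    unfolding s_def sD_eq[OF w] by (rule toeplitz[OF pi_gt1]) (use Wl i01 in auto)
  have K: "Tr n \<inter> Ty i - Tr 0 = Kset i n" for n by (simp add: Kset_def)
  have e1: "(\<Sum>k\<in>Kset i n. \<epsilon> k \<omega> ^ 2 * real (delta \<zeta> k \<omega>)) / \<pi> ^ n
      = \<sigma>2 * (s n / \<pi> ^ n) + (\<Sum>k\<in>Kset i n. U1 k \<omega>) / \<pi> ^ n" for n
  proof -
    have "(\<Sum>k\<in>Kset i n. \<epsilon> k \<omega> ^ 2 * real (delta \<zeta> k \<omega>)) = (\<Sum>k\<in>Kset i n. \<sigma>2 * real (delta \<zeta> k \<omega>) + U1 k \<omega>)"
      by (intro sum.cong refl) (simp add: U1_def algebra_simps)
    also have "\<dots> = \<sigma>2 * s n + (\<Sum>k\<in>Kset i n. U1 k \<omega>)" by (simp add: sum.distrib sum_distrib_left s_def)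
    finally show ?thesis by (simp add: add_divide_distrib)
  qed
  have e2: "(\<Sum>k\<in>Kset i n. real (delta \<zeta> (2*k) \<omega> * delta \<zeta> (2*k+1) \<omega>) * \<epsilon> (2*k) \<omega> * \<epsilon> (2*k+1) \<omega>) / \<pi> ^ n
      = (\<Sum>k\<in>Kset i n. U3 k \<omega>) / \<pi> ^ n + \<rho> * ((\<Sum>k\<in>Kset i n. U2 k \<omega>) / \<pi> ^ n) + \<rho> * pp * (s n / \<pi> ^ n)" for n
  proof -
    have "(\<Sum>k\<in>Kset i n. real (delta \<zeta> (2*k) \<omega> * delta \<zeta> (2*k+1) \<omega>) * \<epsilon> (2*k) \<omega> * \<epsilon> (2*k+1) \<omega>)
        = (\<Sum>k\<in>Kset i n. U3 k \<omega> + \<rho> * U2 k \<omega> + \<rho> * pp * real (delta \<zeta> k \<omega>))"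
    proof (intro sum.cong refl)
      fix k assume k: "k \<in> Kset i n"
      then have k1: "1 \<le> k" using Kset_ge2 by fastforce
      have "delta \<zeta> (2*k) \<omega> * delta \<zeta> (2*k+1) \<omega> = delta \<zeta> k \<omega> * (fst (\<zeta> k \<omega>) * snd (\<zeta> k \<omega>))"
        using D01[OF w, of k] unfolding delta_even[OF k1] delta_odd[OF k1] by auto
      then have "real (delta \<zeta> (2*k) \<omega> * delta \<zeta> (2*k+1) \<omega>) = real (delta \<zeta> k \<omega>) * qq k \<omega>"
        unfolding qq_def by simp
      then show "real (delta \<zeta> (2*k) \<omega> * delta \<zeta> (2*k+1) \<omega>) * \<epsilon> (2*k) \<omega> * \<epsilon> (2*k+1) \<omega>
          = U3 k \<omega> + \<rho> * U2 k \<omega> + \<rho> * pp * real (delta \<zeta> k \<omega>)"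
        unfolding U3_def U2_def by (simp add: algebra_simps)
    qed
    also have "\<dots> = (\<Sum>k\<in>Kset i n. U3 k \<omega>) + \<rho> * (\<Sum>k\<in>Kset i n. U2 k \<omega>) + \<rho> * pp * s n"
      by (simp add: sum.distrib sum_distrib_left s_def)
    finally show ?thesis by (simp add: add_divide_distrib)
  qed
  have "(\<lambda>n. \<sigma>2 * (s n / \<pi> ^ n) + (\<Sum>k\<in>Kset i n. U1 k \<omega>) / \<pi> ^ n)
      \<longlonglongrightarrow> \<sigma>2 * (W \<omega> * z i * (\<pi> / (\<pi> - 1))) + 0"
    by (intro tendsto_intros sl c1)
  then have L1: "(\<lambda>n. (\<Sum>k\<in>Tr n \<inter> Ty i - Tr 0. \<epsilon> k \<omega> ^ 2 * real (delta \<zeta> k \<omega>)) / \<pi> ^ n)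
        \<longlonglongrightarrow> \<sigma>2 * (\<pi> / (\<pi> - 1)) * W \<omega> * z i"
    unfolding K e1 by (simp add: mult_ac)
  have "(\<lambda>n. (\<Sum>k\<in>Kset i n. U3 k \<omega>) / \<pi> ^ n + \<rho> * ((\<Sum>k\<in>Kset i n. U2 k \<omega>) / \<pi> ^ n) + \<rho> * pp * (s n / \<pi> ^ n))
      \<longlonglongrightarrow> 0 + \<rho> * 0 + \<rho> * pp * (W \<omega> * z i * (\<pi> / (\<pi> - 1)))"
    by (intro tendsto_intros sl c2 c3)
  then have L2: "(\<lambda>n. (\<Sum>k\<in>Tr n \<inter> Ty i - Tr 0.
            real (delta \<zeta> (2*k) \<omega> * delta \<zeta> (2*k+1) \<omega>) * \<epsilon> (2*k) \<omega> * \<epsilon> (2*k+1) \<omega>) / \<pi> ^ n)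
        \<longlonglongrightarrow> \<rho> * p i 1 1 * (\<pi> / (\<pi> - 1)) * W \<omega> * z i"
    unfolding K e2 pp_def by (simp add: mult_ac)
  show "(\<lambda>n. (\<Sum>k\<in>Tr n \<inter> Ty i - Tr 0. \<epsilon> k \<omega> ^ 2 * real (delta \<zeta> k \<omega>)) / \<pi> ^ n)
        \<longlonglongrightarrow> \<sigma>2 * (\<pi> / (\<pi> - 1)) * W \<omega> * z i
    \<and> (\<lambda>n. (\<Sum>k\<in>Tr n \<inter> Ty i - Tr 0.
            real (delta \<zeta> (2*k) \<omega> * delta \<zeta> (2*k+1) \<omega>) * \<epsilon> (2*k) \<omega> * \<epsilon> (2*k+1) \<omega>) / \<pi> ^ n)
        \<longlonglongrightarrow> \<rho> * p i 1 1 * (\<pi> / (\<pi> - 1)) * W \<omega> * z i" using L1 L2 by blast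
qed

end

theorem lemma5p5:
  fixes M :: "'a measure"
    and X \<epsilon> :: "nat \<Rightarrow> 'a \<Rightarrow> real"
    and \<zeta> :: "nat \<Rightarrow> 'a \<Rightarrow> nat \<times> nat"
    and p :: "nat \<Rightarrow> nat \<Rightarrow> nat \<Rightarrow> real"
    and a b c d \<sigma>2 \<tau>4 \<kappa>8 \<rho> \<rho>' \<nu>2 lam4 \<pi> :: real
    and z :: "nat \<Rightarrow> real"
    and W :: "'a \<Rightarrow> real"
    and i :: nat
  assumes prob: "prob_space M"
    \<comment> \<open>BAR process\<close>
    and X_meas: "\<And>k. X k \<in> borel_measurable M"
    and eps_meas: "\<And>k. \<epsilon> k \<in> borel_measurable M"
    and X1_L8: "integrable M (\<lambda>\<omega>. X 1 \<omega> ^ 8)"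
    and bar0: "\<And>k \<omega>. k \<ge> 1 \<Longrightarrow> \<omega> \<in> space M \<Longrightarrow> X (2*k) \<omega> = a + b * X k \<omega> + \<epsilon> (2*k) \<omega>"
    and bar1: "\<And>k \<omega>. k \<ge> 1 \<Longrightarrow> \<omega> \<in> space M \<Longrightarrow> X (2*k+1) \<omega> = c + d * X k \<omega> + \<epsilon> (2*k+1) \<omega>"
    and bd: "0 < max \<bar>b\<bar> \<bar>d\<bar>" "max \<bar>b\<bar> \<bar>d\<bar> < 1"
    \<comment> \<open>(HN.1)\<close>
    and params: "\<sigma>2 > 0" "\<tau>4 > 0" "\<kappa>8 > 0" "\<rho> = \<rho>' * \<sigma>2" "\<bar>\<rho>'\<bar> < 1"
      "0 \<le> \<nu>2" "\<nu>2 < 1" "0 \<le> lam4" "lam4 < 1"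
    and eps_L8: "\<And>n k. k \<in> Gen (Suc n) \<Longrightarrow> integrable M (\<lambda>\<omega>. \<epsilon> k \<omega> ^ 8)"
    and ce1: "\<And>n k. k \<in> Gen (Suc n) \<Longrightarrow>
      AE \<omega> in M. real_cond_exp M (natF M X n) (\<epsilon> k) \<omega> = 0"
    and ce2: "\<And>n k. k \<in> Gen (Suc n) \<Longrightarrow>
      AE \<omega> in M. real_cond_exp M (natF M X n) (\<lambda>\<omega>. \<epsilon> k \<omega> ^ 2) \<omega> = \<sigma>2"
    and ce4: "\<And>n k. k \<in> Gen (Suc n) \<Longrightarrow>
      AE \<omega> in M. real_cond_exp M (natF M X n) (\<lambda>\<omega>. \<epsilon> k \<omega> ^ 4) \<omega> = \<tau>4"
    and ce8: "\<And>n k. k \<in> Gen (Suc n) \<Longrightarrow>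
      AE \<omega> in M. real_cond_exp M (natF M X n) (\<lambda>\<omega>. \<epsilon> k \<omega> ^ 8) \<omega> = \<kappa>8"
    and cc1: "\<And>n k. k \<in> Gen n \<Longrightarrow>
      AE \<omega> in M. real_cond_exp M (natF M X n) (\<lambda>\<omega>. \<epsilon> (2*k) \<omega> * \<epsilon> (2*k+1) \<omega>) \<omega> = \<rho>"
    and cc2: "\<And>n k. k \<in> Gen n \<Longrightarrow>
      AE \<omega> in M. real_cond_exp M (natF M X n)
        (\<lambda>\<omega>. \<epsilon> (2*k) \<omega> ^ 2 * \<epsilon> (2*k+1) \<omega> ^ 2) \<omega> = \<nu>2 * \<tau>4"
    and cc4: "\<And>n k. k \<in> Gen n \<Longrightarrow>
      AE \<omega> in M. real_cond_exp M (natF M X n)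
        (\<lambda>\<omega>. \<epsilon> (2*k) \<omega> ^ 4 * \<epsilon> (2*k+1) \<omega> ^ 4) \<omega> = lam4 * \<kappa>8"
    \<comment> \<open>(HN.2): conditional independence of the pairs given F_n\<close>
    and cind: (* conditional independence of a family = of each finite subfamily *) "\<And>n J B. J \<subseteq> Gen n \<Longrightarrow> (\<And>k. k \<in> J \<Longrightarrow> B k \<in> sets (borel :: (real \<times> real) measure)) \<Longrightarrow>
      AE \<omega> in M. real_cond_exp M (natF M X n)
          (\<lambda>\<omega>. \<Prod>k\<in>J. indicator (B k) (\<epsilon> (2*k) \<omega>, \<epsilon> (2*k+1) \<omega>)) \<omega>
        = (\<Prod>k\<in>J. real_cond_exp M (natF M X n)
             (\<lambda>\<omega>. indicator (B k) (\<epsilon> (2*k) \<omega>, \<epsilon> (2*k+1) \<omega>)) \<omega>)"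
    \<comment> \<open>observation process\<close>
    and zeta_val: "\<And>k \<omega>. \<omega> \<in> space M \<Longrightarrow> \<zeta> k \<omega> \<in> {0,1} \<times> {0,1}"
    and zeta_indep: "prob_space.indep_vars M (\<lambda>_. count_space UNIV) \<zeta> {1..}"
    and zeta_law: "\<And>k j0 j1. k \<ge> 1 \<Longrightarrow>
      measure M {\<omega> \<in> space M. \<zeta> k \<omega> = (j0, j1)} = p (k mod 2) j0 j1"
    \<comment> \<open>(HO)\<close>
    and P_pos: "\<And>i' (j::nat). i' \<le> 1 \<Longrightarrow> j \<le> 1 \<Longrightarrow>
      0 < (if j = 0 then p i' 1 0 + p i' 1 1 else p i' 0 1 + p i' 1 1)"
    and pi_def: "\<pi> = perron_eig (p 0 1 0 + p 0 1 1) (p 0 0 1 + p 0 1 1)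
                                (p 1 1 0 + p 1 1 1) (p 1 0 1 + p 1 1 1)"
    and pi_gt1: "\<pi> > 1"
    and z_pos: "z 0 > 0" "z 1 > 0" "z 0 + z 1 = 1"
    and z_eig0: "z 0 * (p 0 1 0 + p 0 1 1) + z 1 * (p 1 1 0 + p 1 1 1) = \<pi> * z 0"
    and z_eig1: "z 0 * (p 0 0 1 + p 0 1 1) + z 1 * (p 1 0 1 + p 1 1 1) = \<pi> * z 1"
    \<comment> \<open>(HI)\<close>
    and HI: "prob_space.indep_set M
      (gen_events M (PiM {1..} (\<lambda>_. count_space (UNIV :: (nat \<times> nat) set)))
         (\<lambda>\<omega>. restrict (\<lambda>k. \<zeta> k \<omega>) {1..}))
      (gen_events M (PiM {1..} (\<lambda>_. borel \<Otimes>\<^sub>M borel))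
         (\<lambda>\<omega>. restrict (\<lambda>k. (X k \<omega>, \<epsilon> k \<omega>)) {1..}))"
    \<comment> \<open>the limit variable W\<close>
    and W_meas: "W \<in> borel_measurable M"
    and W_nonneg: "\<And>\<omega>. \<omega> \<in> space M \<Longrightarrow> W \<omega> \<ge> 0"
    and W_lim: "AE \<omega> in M. \<forall>j\<in>{0,1}.
      (\<lambda>n. real (Zcount \<zeta> n j \<omega>) / \<pi> ^ n) \<longlonglongrightarrow> W \<omega> * z j"
    and i01: "i \<in> {0, 1}"
  shows "AE \<omega> in M.
      (\<lambda>n. (\<Sum>k\<in>Tr n \<inter> Ty i - Tr 0. \<epsilon> k \<omega> ^ 2 * real (delta \<zeta> k \<omega>)) / \<pi> ^ n)
        \<longlonglongrightarrow> \<sigma>2 * (\<pi> / (\<pi> - 1)) * W \<omega> * z i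
    \<and> (\<lambda>n. (\<Sum>k\<in>Tr n \<inter> Ty i - Tr 0.
            real (delta \<zeta> (2*k) \<omega> * delta \<zeta> (2*k+1) \<omega>) * \<epsilon> (2*k) \<omega> * \<epsilon> (2*k+1) \<omega>) / \<pi> ^ n)
        \<longlonglongrightarrow> \<rho> * p i 1 1 * (\<pi> / (\<pi> - 1)) * W \<omega> * z i"
proof -
  interpret BLoc M X \<epsilon> \<zeta> p a b c d \<sigma>2 \<tau>4 \<kappa>8 \<rho> \<rho>' \<nu>2 lam4 \<pi> z W i
    by (intro BLoc.intro) (fact assms)+
  show ?thesis by (rule main_L)
qed

end
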